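(* Let $R=\{R_\chi\}_{\chi\in\hat G\setminus\{1\}}$ be a complete set of frame fields and let $\mathcal{O}_R:\mathcal{B}(\mathcal{H}_{\rm kin})\to\mathcal{B}(\mathcal{H}_{\rm pn})$ be the quantum channel $\mathcal{O}_R(\rho)=\Pi_{\rm pn}\rho\Pi_{\rm pn}+\sum_{\chi\in\hat G\setminus\{1\}}R_\chi^{-1}P_\chi\rho P_\chi R_\chi$. Then $\mathcal{O}_R$ corrects every error set $\mathcal{E}\subset\mathcal{P}_n$ containing the identity such that, for every $E\in\mathcal{E}$: if $E\in C_1$ then $E\Pi_{\rm pn}=\eta\Pi_{\rm pn}$ for some $\eta\in\mathbb{C}$ with $|\eta|=1$; and if $E\in C_\chi$ with $\chi\ne1$ then $R_\chi^{-1}E\Pi_{\rm pn}=\eta\Pi_{\rm pn}$ for some $\eta\in\mathbb{C}$ with $|\eta|=1$. Conversely, for every maximal correctable error set $\mathcal{E}\subset\mathcal{P}_n$ containing the identity, there exists a complete set of frame fields $R$ such that $\mathcal{O}_R$ corrects $\mathcal{E}$, and this $R$ is unique up to a choice of global phase for each $R_\chi$.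
   Context: Let $n\ge1$, $0\le k<n$, $\mathcal{H}_{\rm kin}=(\mathbb{C}^2)^{\otimes n}$, $\mathcal{P}_n$ the $n$-qubit Pauli group, $G=\mathbb{Z}_2^{\times(n-k)}$, $U:G\to\mathcal{P}_n$, $g\mapsto U^g$, a faithful unitary representation with $-I\notin U(G)$. $\mathcal{H}_{\rm pn}=\{\psi:U^g\psi=\psi\ \forall g\}$, $\Pi_{\rm pn}=\frac1{|G|}\sum_gU^g$. $\hat G$ is the character group $\{\chi:G\to\{\pm1\}\}$ with trivial character $1$; $P_\chi=\frac1{|G|}\sum_g\chi(g)U^g$ projects onto $\mathcal{H}_\chi$; $C_\chi=\{E\in\mathcal{P}_n:U^gE(U^g)^\dagger=\chi(g)E\ \forall g\}$. A frame field of charge $\chi\ne1$ is an isometry $R_\chi:\mathcal{H}_{\rm pn}\to\mathcal{H}_\chi$ ($R_\chi^{-1}$ denotes its inverse on $\mathcal{H}_\chi$); a complete set of frame fields has one for each $\chi\ne1$. A set $\{E_i\}$ is correctable if $\Pi_{\rm pn}E_i^\dagger E_j\Pi_{\rm pn}=C_{ij}\Pi_{\rm pn}$ with $(C_{ij})$ Hermitian, maximal if $\mathrm{rank}(C)=2^{n-k}$. A channel $\mathcal{O}$ corrects $\mathcal{E}$ if $\mathcal{O}(\sum_k\tilde E_k\rho\tilde E_k^\dagger)=\rho$ for every density operator $\rho$ supported on $\mathcal{H}_{\rm pn}$ and every family $\{\tilde E_k\}\subset\mathrm{span}_\mathbb{C}\mathcal{E}$ with $\Pi_{\rm pn}\sum_k\tilde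 E_k^\dagger\tilde E_k\Pi_{\rm pn}=\Pi_{\rm pn}$. *)

theory Defs
  imports "Jordan_Normal_Form.Jordan_Normal_Form" "Jordan_Normal_Form.DL_Rank"
          "Jordan_Normal_Form.Schur_Decomposition"
begin

text \<open>Operators on the kinematic Hilbert space (C^2)^{(x) n} are 2^n x 2^n complex
  matrices; basis index a < 2^n is read as a bit string of length n.\<close>

definition popcnt :: "nat \<Rightarrow> nat \<Rightarrow> nat" where
  "popcnt n a = card {i. i < n \<and> bit a i}"

text \<open>The Pauli operator X^x Z^z (x, z bit strings of length n).\<close>
definition pauliXZ :: "nat \<Rightarrow> nat \<Rightarrow> nat \<Rightarrow> complex mat" where
  "pauliXZ n x z = mat (2^n) (2^n)
     (\<lambda>(a,b). if a = xor b x then (-1) ^ popcnt n (and z b) else 0)"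

definition pauli_group :: "nat \<Rightarrow> complex mat set" where
  "pauli_group n = {\<i> ^ m \<cdot>\<^sub>m pauliXZ n x z | m x z. x < 2^n \<and> z < 2^n}"

abbreviation adj :: "complex mat \<Rightarrow> complex mat" where
  "adj A \<equiv> mat_adjoint A"

definition msum :: "nat \<Rightarrow> complex mat list \<Rightarrow> complex mat" where
  "msum N xs = foldr (+) xs (0\<^sub>m N N)"

definition msumS :: "nat \<Rightarrow> ('i \<Rightarrow> complex mat) \<Rightarrow> 'i set \<Rightarrow> complex mat" where
  "msumS N f S = finsum (ring_mat TYPE(complex) N ()) f S"

definition mtrace :: "complex mat \<Rightarrow> complex" where
  "mtrace A = (\<Sum>i<dim_row A. A $$ (i,i))"

text \<open>The gauge group G = Z_2^{n-k}, realised as {g. g < 2^(n-k)} with bitwise xor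
  (neutral element 0).\<close>
definition grp :: "nat \<Rightarrow> nat \<Rightarrow> nat set" where
  "grp n k = {..<2^(n-k)}"

definition pauli_rep :: "nat \<Rightarrow> nat \<Rightarrow> (nat \<Rightarrow> complex mat) \<Rightarrow> bool" where
  "pauli_rep n k U \<longleftrightarrow>
     (\<forall>g\<in>grp n k. U g \<in> pauli_group n) \<and>
     (\<forall>g\<in>grp n k. \<forall>h\<in>grp n k. U (xor g h) = U g * U h) \<and>
     inj_on U (grp n k) \<and>
     - (1\<^sub>m (2^n)) \<notin> U ` grp n k"

text \<open>Character group of G (characters extended by 1 outside G, so that they are
  determined by their values on G).\<close>
definition chars :: "nat \<Rightarrow> nat \<Rightarrow> (nat \<Rightarrow> complex) set" where
  "chars n k = {\<chi>. (\<forall>g\<in>grp n k. \<chi> g = 1 \<or> \<chi> g = -1) \<and>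
                   (\<forall>g\<in>grp n k. \<forall>h\<in>grp n k. \<chi> (xor g h) = \<chi> g * \<chi> h) \<and>
                   (\<forall>g. g \<notin> grp n k \<longrightarrow> \<chi> g = 1)}"

definition triv_char :: "nat \<Rightarrow> complex" where
  "triv_char = (\<lambda>_. 1)"

definition Pchi :: "nat \<Rightarrow> nat \<Rightarrow> (nat \<Rightarrow> complex mat) \<Rightarrow> (nat \<Rightarrow> complex) \<Rightarrow> complex mat" where
  "Pchi n k U \<chi> = (1 / of_nat (card (grp n k))) \<cdot>\<^sub>m
      msum (2^n) (map (\<lambda>g. \<chi> g \<cdot>\<^sub>m U g) [0..<2^(n-k)])"

definition Ppn :: "nat \<Rightarrow> nat \<Rightarrow> (nat \<Rightarrow> complex mat) \<Rightarrow> complex mat" where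
  "Ppn n k U = (1 / of_nat (card (grp n k))) \<cdot>\<^sub>m msum (2^n) (map U [0..<2^(n-k)])"

definition Cset :: "nat \<Rightarrow> nat \<Rightarrow> (nat \<Rightarrow> complex mat) \<Rightarrow> (nat \<Rightarrow> complex) \<Rightarrow> complex mat set" where
  "Cset n k U \<chi> = {E \<in> pauli_group n. \<forall>g\<in>grp n k. U g * E * adj (U g) = \<chi> g \<cdot>\<^sub>m E}"

text \<open>A frame field of charge chi: an isometry H_pn -> H_chi, represented by its
  extension by zero on the orthogonal complement of H_pn (a 2^n x 2^n matrix R with
  R^dagger R = Pi_pn and range inside H_chi).  Its inverse on H_chi is R^dagger.\<close>
definition frame_field :: "nat \<Rightarrow> nat \<Rightarrow> (nat \<Rightarrow> complex mat) \<Rightarrow> (nat \<Rightarrow> complex) \<Rightarrow> complex mat \<Rightarrow> bool" where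
  "frame_field n k U \<chi> R \<longleftrightarrow> R \<in> carrier_mat (2^n) (2^n) \<and>
      adj R * R = Ppn n k U \<and> Pchi n k U \<chi> * R = R"

definition complete_frames :: "nat \<Rightarrow> nat \<Rightarrow> (nat \<Rightarrow> complex mat) \<Rightarrow> ((nat \<Rightarrow> complex) \<Rightarrow> complex mat) \<Rightarrow> bool" where
  "complete_frames n k U R \<longleftrightarrow> (\<forall>\<chi>\<in>chars n k - {triv_char}. frame_field n k U \<chi> (R \<chi>))"

definition channelO :: "nat \<Rightarrow> nat \<Rightarrow> (nat \<Rightarrow> complex mat) \<Rightarrow> ((nat \<Rightarrow> complex) \<Rightarrow> complex mat) \<Rightarrow> complex mat \<Rightarrow> complex mat" where
  "channelO n k U R \<rho> = Ppn n k U * \<rho> * Ppn n k U +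
     msumS (2^n) (\<lambda>\<chi>. adj (R \<chi>) * Pchi n k U \<chi> * \<rho> * Pchi n k U \<chi> * R \<chi>)
        (chars n k - {triv_char})"

definition psd :: "nat \<Rightarrow> complex mat \<Rightarrow> bool" where
  "psd N A \<longleftrightarrow> A \<in> carrier_mat N N \<and>
     (\<forall>v\<in>carrier_vec N. Im (conjugate v \<bullet> (A *\<^sub>v v)) = 0 \<and> Re (conjugate v \<bullet> (A *\<^sub>v v)) \<ge> 0)"

definition density_pn :: "nat \<Rightarrow> nat \<Rightarrow> (nat \<Rightarrow> complex mat) \<Rightarrow> complex mat \<Rightarrow> bool" where
  "density_pn n k U \<rho> \<longleftrightarrow> psd (2^n) \<rho> \<and> mtrace \<rho> = 1 \<and> Ppn n k U * \<rho> * Ppn n k U = \<rho>"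

definition mspan :: "nat \<Rightarrow> complex mat set \<Rightarrow> complex mat set" where
  "mspan N S = {msum N (map (\<lambda>(c,E). c \<cdot>\<^sub>m E) cs) | cs. set (map snd cs) \<subseteq> S}"

definition corrects :: "nat \<Rightarrow> nat \<Rightarrow> (nat \<Rightarrow> complex mat) \<Rightarrow> (complex mat \<Rightarrow> complex mat) \<Rightarrow> complex mat set \<Rightarrow> bool" where
  "corrects n k U Ch Es \<longleftrightarrow>
     (\<forall>\<rho> Ks. density_pn n k U \<rho> \<longrightarrow> set Ks \<subseteq> mspan (2^n) Es \<longrightarrow>
        Ppn n k U * msum (2^n) (map (\<lambda>K. adj K * K) Ks) * Ppn n k U = Ppn n k U \<longrightarrow>
        Ch (msum (2^n) (map (\<lambda>K. K * \<rho> * adj K) Ks)) = \<rho>)"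

definition correctable_with :: "nat \<Rightarrow> nat \<Rightarrow> (nat \<Rightarrow> complex mat) \<Rightarrow> complex mat set \<Rightarrow> (complex mat \<Rightarrow> complex mat \<Rightarrow> complex) \<Rightarrow> bool" where
  "correctable_with n k U Es C \<longleftrightarrow>
     (\<forall>E\<in>Es. \<forall>F\<in>Es. Ppn n k U * adj E * F * Ppn n k U = C E F \<cdot>\<^sub>m Ppn n k U) \<and>
     (\<forall>E\<in>Es. \<forall>F\<in>Es. C E F = cnj (C F E))"

definition correctable :: "nat \<Rightarrow> nat \<Rightarrow> (nat \<Rightarrow> complex mat) \<Rightarrow> complex mat set \<Rightarrow> bool" where
  "correctable n k U Es \<longleftrightarrow> (\<exists>C. correctable_with n k U Es C)"

definition maximal_correctable :: "nat \<Rightarrow> nat \<Rightarrow> (nat \<Rightarrow> complex mat) \<Rightarrow> complex mat set \<Rightarrow> bool" where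
  "maximal_correctable n k U Es \<longleftrightarrow> finite Es \<and>
     (\<exists>C e. correctable_with n k U Es C \<and> bij_betw e {..<card Es} Es \<and>
        vec_space.rank (card Es) (mat (card Es) (card Es) (\<lambda>(i,j). C (e i) (e j))) = 2^(n-k))"

end

theory Submission
  imports Defs
begin

lemma adj_dim[simp]: "dim_row (adj A) = dim_col A" "dim_col (adj A) = dim_row A"
  unfolding mat_adjoint_def by auto
lemma adj_index[simp]: "adj A $$ (i,j) = cnj (A $$ (j,i))" if "i < dim_col A" "j < dim_row A"
  unfolding mat_adjoint_def using that apply (simp add: mat_of_rows_index cols_def)
  done
lemma adj_carrier[simp]: "A \<in> carrier_mat n m \<Longrightarrow> adj A \<in> carrier_mat m n"
  unfolding carrier_mat_def by simp
lemma adj_adj[simp]: "adj (adj A) = A"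
  by (rule eq_matI) simp_all
lemma adj_mult: "A \<in> carrier_mat n m \<Longrightarrow> B \<in> carrier_mat m p \<Longrightarrow> adj (A * B) = adj B * adj A"
  apply (rule eq_matI) 
    apply (simp_all add: scalar_prod_def)
  apply (rule sum.cong, simp_all)
  done
lemma adj_add: "A \<in> carrier_mat n m \<Longrightarrow> B \<in> carrier_mat n m \<Longrightarrow> adj (A + B) = adj A + adj B"
  by (rule eq_matI) simp_all
lemma adj_smult: "adj (c \<cdot>\<^sub>m A) = cnj c \<cdot>\<^sub>m adj A"
  by (rule eq_matI) simp_all
lemma adj_one[simp]: "adj (1\<^sub>m n) = 1\<^sub>m n"
  by (rule eq_matI) simp_all
lemma adj_zero[simp]: "adj (0\<^sub>m n m) = 0\<^sub>m m n"
  by (rule eq_matI) simp_all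

definition MS :: "nat \<Rightarrow> ('i \<Rightarrow> complex mat) \<Rightarrow> 'i set \<Rightarrow> complex mat" where
  "MS N f S = mat N N (\<lambda>(i,j). \<Sum>x\<in>S. f x $$ (i,j))"

lemma MS_carrier[simp]: "MS N f S \<in> carrier_mat N N"
  and MS_dim[simp]: "dim_row (MS N f S) = N" "dim_col (MS N f S) = N"
  unfolding MS_def by auto

lemma MS_index[simp]: "i < N \<Longrightarrow> j < N \<Longrightarrow> MS N f S $$ (i,j) = (\<Sum>x\<in>S. f x $$ (i,j))"
  unfolding MS_def by simp

lemma MS_cong: "(\<And>x. x \<in> S \<Longrightarrow> f x = g x) \<Longrightarrow> MS N f S = MS N g S"
  unfolding MS_def by (simp cong: sum.cong)

lemma MS_empty[simp]: "MS N f {} = 0\<^sub>m N N"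
  by (rule eq_matI) simp_all

lemma MS_insert: "finite S \<Longrightarrow> x \<notin> S \<Longrightarrow> f x \<in> carrier_mat N N \<Longrightarrow> MS N f (insert x S) = f x + MS N f S"
  by (rule eq_matI) simp_all

lemma msumS_MS: assumes "finite S" "\<And>x. x \<in> S \<Longrightarrow> f x \<in> carrier_mat N N"
  shows "msumS N f S = MS N f S"
  using assms
proof (induction S rule: finite_induct)
  case empty
  interpret R: ring "ring_mat TYPE(complex) N ()" by (rule ring_mat)
  show ?case unfolding msumS_def using R.finsum_empty by (simp add: ring_mat_simps)
next
  case (insert x F)
  interpret R: ring "ring_mat TYPE(complex) N ()" by (rule ring_mat)
  have "msumS N f (insert x F) = f x + msumS N f F"
    unfolding msumS_def 
    using insert by (subst R.finsum_insert) (auto simp: ring_mat_simps Pi_def)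
  then show ?case using insert by (simp add: MS_insert)
qed

lemma msum_MS: assumes "distinct xs" "\<And>x. x \<in> set xs \<Longrightarrow> f x \<in> carrier_mat N N"
  shows "msum N (map f xs) = MS N f (set xs)"
  using assms
proof (induction xs)
  case Nil
  then show ?case by (simp add: msum_def)
next
  case (Cons a xs)
  have "msum N (map f (a # xs)) = f a + msum N (map f xs)" by (simp add: msum_def)
  then show ?case using Cons by (simp add: MS_insert)
qed

lemma MS_mult_left: assumes "A \<in> carrier_mat N N" "\<And>x. x \<in> S \<Longrightarrow> f x \<in> carrier_mat N N"
  shows "A * MS N f S = MS N (\<lambda>x. A * f x) S"
proof (rule eq_matI)
  have d: "\<And>x. x \<in> S \<Longrightarrow> dim_row (f x) = N \<and> dim_col (f x) = N" using assms(2) by auto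
  have dA: "dim_row A = N" "dim_col A = N" using assms(1) by auto
  fix i j assume ij: "i < dim_row (MS N (\<lambda>x. A * f x) S)" "j < dim_col (MS N (\<lambda>x. A * f x) S)"
  have "(A * MS N f S) $$ (i,j) = (\<Sum>k<N. A $$ (i,k) * (\<Sum>x\<in>S. f x $$ (k,j)))"
    using ij dA by (simp add: scalar_prod_def atLeast0LessThan)
  also have "\<dots> = (\<Sum>x\<in>S. \<Sum>k<N. A $$ (i,k) * f x $$ (k,j))"
    by (simp add: sum_distrib_left sum.swap[of _ S])
  also have "\<dots> = MS N (\<lambda>x. A * f x) S $$ (i,j)"
    using ij dA by (simp, intro sum.cong) (simp_all add: d scalar_prod_def atLeast0LessThan)
  finally show "(A * MS N f S) $$ (i,j) = MS N (\<lambda>x. A * f x) S $$ (i,j)" .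
qed (use assms in simp_all)

lemma MS_mult_right: assumes "A \<in> carrier_mat N N" "\<And>x. x \<in> S \<Longrightarrow> f x \<in> carrier_mat N N"
  shows "MS N f S * A = MS N (\<lambda>x. f x * A) S"
proof (rule eq_matI)
  have d: "\<And>x. x \<in> S \<Longrightarrow> dim_row (f x) = N \<and> dim_col (f x) = N" using assms(2) by auto
  have dA: "dim_row A = N" "dim_col A = N" using assms(1) by auto
  fix i j assume ij: "i < dim_row (MS N (\<lambda>x. f x * A) S)" "j < dim_col (MS N (\<lambda>x. f x * A) S)"
  have "(MS N f S * A) $$ (i,j) = (\<Sum>k<N. (\<Sum>x\<in>S. f x $$ (i,k)) * A $$ (k,j))"
    using ij dA by (simp add: scalar_prod_def atLeast0LessThan)
  also have "\<dots> = (\<Sum>x\<in>S. \<Sum>k<N. f x $$ (i,k) * A $$ (k,j))"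
    by (simp add: sum_distrib_right sum.swap[of _ S])
  also have "\<dots> = MS N (\<lambda>x. f x * A) S $$ (i,j)"
    using ij dA by (simp, intro sum.cong) (simp_all add: d scalar_prod_def atLeast0LessThan)
  finally show "(MS N f S * A) $$ (i,j) = MS N (\<lambda>x. f x * A) S $$ (i,j)" .
qed (use assms in simp_all)

lemma MS_smult: "c \<cdot>\<^sub>m MS N f S = MS N (\<lambda>x. c \<cdot>\<^sub>m f x) S"
  if "\<And>x. x \<in> S \<Longrightarrow> f x \<in> carrier_mat N N"
proof (rule eq_matI)
  have d: "\<And>x. x \<in> S \<Longrightarrow> dim_row (f x) = N \<and> dim_col (f x) = N" using that by auto
  fix i j assume ij: "i < dim_row (MS N (\<lambda>x. c \<cdot>\<^sub>m f x) S)" "j < dim_col (MS N (\<lambda>x. c \<cdot>\<^sub>m f x) S)"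
  then show "(c \<cdot>\<^sub>m MS N f S) $$ (i, j) = MS N (\<lambda>x. c \<cdot>\<^sub>m f x) S $$ (i, j)"
    by (simp add: sum_distrib_left d cong: sum.cong)
qed simp_all

lemma MS_add: "MS N f S + MS N g S = MS N (\<lambda>x. f x + g x) S"
  if "\<And>x. x \<in> S \<Longrightarrow> f x \<in> carrier_mat N N" "\<And>x. x \<in> S \<Longrightarrow> g x \<in> carrier_mat N N"
proof (rule eq_matI)
  have d: "\<And>x. x \<in> S \<Longrightarrow> dim_row (f x) = N \<and> dim_col (f x) = N \<and> dim_row (g x) = N \<and> dim_col (g x) = N" using that by auto
  fix i j assume ij: "i < dim_row (MS N (\<lambda>x. f x + g x) S)" "j < dim_col (MS N (\<lambda>x. f x + g x) S)"
  have "(MS N f S + MS N g S) $$ (i, j) = (\<Sum>x\<in>S. f x $$ (i,j)) + (\<Sum>x\<in>S. g x $$ (i,j))"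
    using ij by simp
  also have "\<dots> = (\<Sum>x\<in>S. f x $$ (i,j) + g x $$ (i,j))" by (rule sum.distrib[symmetric])
  also have "\<dots> = MS N (\<lambda>x. f x + g x) S $$ (i, j)" using ij by (simp add: d cong: sum.cong)
  finally show "(MS N f S + MS N g S) $$ (i, j) = MS N (\<lambda>x. f x + g x) S $$ (i, j)" .
qed simp_all

lemma MS_adj: "adj (MS N f S) = MS N (\<lambda>x. adj (f x)) S"
  if "\<And>x. x \<in> S \<Longrightarrow> f x \<in> carrier_mat N N"
proof (rule eq_matI)
  have d: "\<And>x. x \<in> S \<Longrightarrow> dim_row (f x) = N \<and> dim_col (f x) = N" using that by auto
  fix i j assume ij: "i < dim_row (MS N (\<lambda>x. adj (f x)) S)" "j < dim_col (MS N (\<lambda>x. adj (f x)) S)"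
  then show "adj (MS N f S) $$ (i, j) = MS N (\<lambda>x. adj (f x)) S $$ (i, j)"
    by (simp add: d cong: sum.cong)
qed simp_all

lemma MS_scal: "MS N (\<lambda>x. c x \<cdot>\<^sub>m A) S = (\<Sum>x\<in>S. c x) \<cdot>\<^sub>m A"
  if "A \<in> carrier_mat N N"
  by (rule eq_matI) (use that in \<open>simp_all add: sum_distrib_right\<close>)

lemma MS_zero: "(\<And>x. x \<in> S \<Longrightarrow> f x = 0\<^sub>m N N) \<Longrightarrow> MS N f S = 0\<^sub>m N N"
  by (rule eq_matI) simp_all

lemma MS_single: assumes "finite S" "x0 \<in> S" "\<And>x. x \<in> S \<Longrightarrow> x \<noteq> x0 \<Longrightarrow> f x = 0\<^sub>m N N"
  "f x0 \<in> carrier_mat N N"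
  shows "MS N f S = f x0"
proof -
  have e: "S = insert x0 (S - {x0})" using assms by auto
  have "MS N f (insert x0 (S - {x0})) = f x0 + MS N f (S - {x0})" using assms
    by (intro MS_insert) simp_all
  then have "MS N f S = f x0 + MS N f (S - {x0})" using e by simp
  also have "MS N f (S - {x0}) = 0\<^sub>m N N" using assms by (intro MS_zero) auto
  finally show ?thesis using assms by simp
qed

lemma MS_reindex: "bij_betw h S T \<Longrightarrow> MS N (\<lambda>x. f (h x)) S = MS N f T"
proof -
  assume b: "bij_betw h S T"
  show ?thesis unfolding MS_def using sum.reindex_bij_betw[OF b, of "\<lambda>x. f x $$ _"] by simp
qed


lemma multN[simp]: "A \<in> carrier_mat N N \<Longrightarrow> B \<in> carrier_mat N N \<Longrightarrow> A * B \<in> carrier_mat N N"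
  by (rule mult_carrier_mat)
lemma adjN[simp]: "A \<in> carrier_mat N N \<Longrightarrow> adj A \<in> carrier_mat N N"
  by simp
lemma assocN: "A \<in> carrier_mat N N \<Longrightarrow> B \<in> carrier_mat N N \<Longrightarrow> C \<in> carrier_mat N N \<Longrightarrow> A * B * C = A * (B * (C::complex mat))"
  by (rule assoc_mult_mat)

definition sg :: "nat \<Rightarrow> nat \<Rightarrow> complex" where "sg n a = (-1) ^ popcnt n a"

lemma xor_lt: "(a::nat) < 2^n \<Longrightarrow> b < 2^n \<Longrightarrow> xor a b < 2^n"
proof -
  assume "a < 2^n" "b < 2^n"
  then have "take_bit n a = a" "take_bit n b = b" by (simp_all add: take_bit_nat_eq_self_iff)
  then have "take_bit n (xor a b) = xor a b" by (metis take_bit_xor)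
  then show ?thesis by (metis take_bit_nat_less_exp)
qed

lemma bit_lt: "(a::nat) < 2^n \<Longrightarrow> bit a i \<Longrightarrow> i < n"
  by (metis bit_take_bit_iff take_bit_nat_eq_self_iff)

lemma popcnt_xor: "popcnt n (xor a b) + 2 * card ({i. i < n \<and> bit a i} \<inter> {i. i < n \<and> bit b i})
   = popcnt n a + popcnt n b"
proof -
  define A where "A = {i. i < n \<and> bit a i}"
  define B where "B = {i. i < n \<and> bit b i}"
  have fA: "finite A" "finite B" unfolding A_def B_def by simp_all
  have x: "{i. i < n \<and> bit (xor a b) i} = (A - B) \<union> (B - A)"
    unfolding A_def B_def by (simp add: bit_xor_iff) blast
  have c1: "card {i. i < n \<and> bit (xor a b) i} = card (A - B) + card (B - A)"
    unfolding x by (rule card_Un_disjoint) (use fA in blast)+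
  have e2: "A = (A - B) \<union> (A \<inter> B)" by blast
  have "card ((A - B) \<union> (A \<inter> B)) = card (A - B) + card (A \<inter> B)"
    by (rule card_Un_disjoint) (use fA in blast)+
  then have c2: "card A = card (A - B) + card (A \<inter> B)" using e2 by simp
  have e3: "B = (B - A) \<union> (A \<inter> B)" by blast
  have "card ((B - A) \<union> (A \<inter> B)) = card (B - A) + card (A \<inter> B)"
    by (rule card_Un_disjoint) (use fA in blast)+
  then have c3: "card B = card (B - A) + card (A \<inter> B)" using e3 by simp
  show ?thesis unfolding popcnt_def using c1 c2 c3 unfolding A_def B_def by simp
qed

lemma sg_xor: "sg n (xor a b) = sg n a * sg n b"
proof -
  let ?c = "card ({i. i < n \<and> bit a i} \<inter> {i. i < n \<and> bit b i})"
  have "(-1::complex) ^ (popcnt n a + popcnt n b) = (-1) ^ (popcnt n (xor a b) + 2 * ?c)"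
    using popcnt_xor[of n a b] by simp
  also have "\<dots> = (-1) ^ popcnt n (xor a b)" by (simp add: power_add power_mult)
  finally show ?thesis unfolding sg_def by (simp add: power_add)
qed

lemma sg_sq: "sg n a * sg n a = 1"
  unfolding sg_def by (simp add: power_add[symmetric] power_mult_distrib[symmetric] flip: power_mult)

lemma sg_cases: "sg n a = 1 \<or> sg n a = -1"
  unfolding sg_def by (metis neg_one_even_power neg_one_odd_power)

lemma smult_smult_m: "a \<cdot>\<^sub>m (b \<cdot>\<^sub>m A) = (a * b) \<cdot>\<^sub>m (A :: complex mat)"
  by (rule eq_matI) simp_all

lemma cnj_sg[simp]: "cnj (sg n a) = sg n a"
  unfolding sg_def by simp

lemma sg_zero[simp]: "sg n 0 = 1"
  unfolding sg_def popcnt_def by simp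

lemma and_xor_distrib1: "and (z::nat) (xor c x) = xor (and z c) (and z x)"
  by (rule bit_eqI) (auto simp: bit_simps)

lemma and_xor_distrib2: "and (xor z z') (c::nat) = xor (and z c) (and z' c)"
  by (rule bit_eqI) (auto simp: bit_simps)

lemma pauliXZ_carrier[simp]: "pauliXZ n x z \<in> carrier_mat (2^n) (2^n)"
  and pauliXZ_dim[simp]: "dim_row (pauliXZ n x z) = 2^n" "dim_col (pauliXZ n x z) = 2^n"
  unfolding pauliXZ_def by simp_all

lemma pauliXZ_index: "a < 2^n \<Longrightarrow> b < 2^n \<Longrightarrow>
   pauliXZ n x z $$ (a,b) = (if a = xor b x then sg n (and z b) else 0)"
  unfolding pauliXZ_def sg_def by simp

lemma xor_cancel_r: "xor (xor a x) x = (a::nat)" by (simp add: xor.assoc)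
lemma xor_eq_swap: "((b::nat) = xor a x) = (a = xor b x)"
  using xor_cancel_r by metis

lemma pauliXZ_mult: assumes "x < 2^n" "x' < 2^n"
  shows "pauliXZ n x z * pauliXZ n x' z' = sg n (and z x') \<cdot>\<^sub>m pauliXZ n (xor x x') (xor z z')"
proof (rule eq_matI)
  fix a c assume ac: "a < dim_row (sg n (and z x') \<cdot>\<^sub>m pauliXZ n (xor x x') (xor z z'))"
    "c < dim_col (sg n (and z x') \<cdot>\<^sub>m pauliXZ n (xor x x') (xor z z'))"
  then have a: "a < 2^n" and c: "c < 2^n" by simp_all
  define b0 where "b0 = xor c x'"
  have b0: "b0 < 2^n" unfolding b0_def using c assms by (simp add: xor_lt)
  have "(pauliXZ n x z * pauliXZ n x' z') $$ (a,c) =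
      (\<Sum>b<2^n. pauliXZ n x z $$ (a,b) * pauliXZ n x' z' $$ (b,c))"
    using a c by (simp add: scalar_prod_def atLeast0LessThan)
  also have "\<dots> = (\<Sum>b<2^n. if b = b0 then pauliXZ n x z $$ (a,b0) * sg n (and z' c) else 0)"
  proof (rule sum.cong)
    fix b assume "b \<in> {..<(2::nat)^n}"
    then have b: "b < 2^n" by simp
    show "pauliXZ n x z $$ (a,b) * pauliXZ n x' z' $$ (b,c) =
        (if b = b0 then pauliXZ n x z $$ (a,b0) * sg n (and z' c) else 0)"
    proof (cases "b = b0")
      case True
      then show ?thesis using b c by (simp add: pauliXZ_index b0_def)
    next
      case False
      then show ?thesis using b c by (simp add: pauliXZ_index b0_def)
    qed
  qed simp
  also have "\<dots> = pauliXZ n x z $$ (a,b0) * sg n (and z' c)"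
    using b0 by simp
  also have "\<dots> = (if a = xor c (xor x x') then sg n (and z b0) * sg n (and z' c) else 0)"
  proof -
    have "xor b0 x = xor c (xor x x')" unfolding b0_def by (simp add: xor.assoc xor.commute[of x' x])
    then show ?thesis using a b0 by (simp add: pauliXZ_index)
  qed
  also have "\<dots> = (sg n (and z x') \<cdot>\<^sub>m pauliXZ n (xor x x') (xor z z')) $$ (a,c)"
  proof -
    have "sg n (and z b0) * sg n (and z' c) = sg n (and z x') * sg n (and (xor z z') c)"
      unfolding b0_def and_xor_distrib1 and_xor_distrib2 sg_xor by simp
    then show ?thesis using a c by (simp add: pauliXZ_index)
  qed
  finally show "(pauliXZ n x z * pauliXZ n x' z') $$ (a,c) =
      (sg n (and z x') \<cdot>\<^sub>m pauliXZ n (xor x x') (xor z z')) $$ (a,c)" .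
qed simp_all

lemma pauliXZ_00: "pauliXZ n 0 0 = 1\<^sub>m (2^n)"
  by (rule eq_matI) (simp_all add: pauliXZ_index)

lemma one_smult_m[simp]: "(1::complex) \<cdot>\<^sub>m A = A"
  by (rule eq_matI) simp_all

lemma zero_smult_m[simp]: "(0::complex) \<cdot>\<^sub>m A = 0\<^sub>m (dim_row A) (dim_col A)"
  by (rule eq_matI) simp_all

lemma pauliXZ_adj: assumes "x < 2^n"
  shows "adj (pauliXZ n x z) = sg n (and z x) \<cdot>\<^sub>m pauliXZ n x z"
proof (rule eq_matI)
  fix a b assume ab: "a < dim_row (sg n (and z x) \<cdot>\<^sub>m pauliXZ n x z)"
    "b < dim_col (sg n (and z x) \<cdot>\<^sub>m pauliXZ n x z)"
  then have a: "a < 2^n" and b: "b < 2^n" by simp_all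
  have e: "(b = xor a x) = (a = xor b x)" by (rule xor_eq_swap)
  show "adj (pauliXZ n x z) $$ (a,b) = (sg n (and z x) \<cdot>\<^sub>m pauliXZ n x z) $$ (a,b)"
  proof (cases "a = xor b x")
    case True
    then have "and z a = xor (and z b) (and z x)" by (simp add: and_xor_distrib1)
    then have "sg n (and z a) = sg n (and z x) * sg n (and z b)" by (simp add: sg_xor)
    then show ?thesis using a b True e by (simp add: pauliXZ_index)
  next
    case False
    then show ?thesis using a b e by (simp add: pauliXZ_index)
  qed
qed simp_all

lemma pauliXZ_sq: "x < 2^n \<Longrightarrow> pauliXZ n x z * pauliXZ n x z = sg n (and z x) \<cdot>\<^sub>m 1\<^sub>m (2^n)"
  by (simp add: pauliXZ_mult pauliXZ_00)

lemma pauliXZ_unitary: assumes "x < 2^n"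
  shows "adj (pauliXZ n x z) * pauliXZ n x z = 1\<^sub>m (2^n)"
    "pauliXZ n x z * adj (pauliXZ n x z) = 1\<^sub>m (2^n)"
proof -
  have "adj (pauliXZ n x z) * pauliXZ n x z = sg n (and z x) \<cdot>\<^sub>m (pauliXZ n x z * pauliXZ n x z)"
    using assms by (simp add: pauliXZ_adj mult_smult_assoc_mat[OF pauliXZ_carrier pauliXZ_carrier])
  also have "\<dots> = 1\<^sub>m (2^n)" using assms by (simp add: pauliXZ_sq smult_smult_m sg_sq)
  finally show "adj (pauliXZ n x z) * pauliXZ n x z = 1\<^sub>m (2^n)" .
  have "pauliXZ n x z * adj (pauliXZ n x z) = sg n (and z x) \<cdot>\<^sub>m (pauliXZ n x z * pauliXZ n x z)"
    using assms by (simp add: pauliXZ_adj mult_smult_distrib[OF pauliXZ_carrier pauliXZ_carrier])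
  also have "\<dots> = 1\<^sub>m (2^n)" using assms by (simp add: pauliXZ_sq smult_smult_m sg_sq)
  finally show "pauliXZ n x z * adj (pauliXZ n x z) = 1\<^sub>m (2^n)" .
qed

lemma pauliE: "P \<in> pauli_group n \<Longrightarrow> \<exists>m x z. x < 2^n \<and> z < 2^n \<and> P = \<i> ^ m \<cdot>\<^sub>m pauliXZ n x z"
  unfolding pauli_group_def by blast

lemma smult_mult_smult: "A \<in> carrier_mat N N \<Longrightarrow> B \<in> carrier_mat N N \<Longrightarrow>
  (a \<cdot>\<^sub>m A) * (b \<cdot>\<^sub>m B) = (a * b) \<cdot>\<^sub>m (A * (B::complex mat))"
  by (simp add: mult_smult_assoc_mat[of _ N N _ N] mult_smult_distrib[of _ N N _ N] smult_smult_m mult.commute)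

lemma pauli_carrier: "P \<in> pauli_group n \<Longrightarrow> P \<in> carrier_mat (2^n) (2^n)"
  using pauliE by fastforce

lemma pauli_unitary: assumes "P \<in> pauli_group n"
  shows "adj P * P = 1\<^sub>m (2^n)" "P * adj P = 1\<^sub>m (2^n)"
proof -
  obtain m x z where P: "x < 2^n" "z < 2^n" "P = \<i> ^ m \<cdot>\<^sub>m pauliXZ n x z" using pauliE[OF assms] by blast
  have "cnj (\<i> ^ m) * \<i> ^ m = (cnj \<i> * \<i>) ^ m" by (simp only: complex_cnj_power power_mult_distrib)
  moreover have "cnj \<i> * \<i> = 1" by simp
  ultimately have c0: "cnj (\<i> ^ m) * \<i> ^ m = 1" by simp
  then have c: "cnj (\<i> ^ m) * \<i> ^ m = 1" "(- \<i>) ^ m * \<i> ^ m = 1" "\<i> ^ m * (- \<i>) ^ m = 1" 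
    by (simp_all add: mult.commute)
  show "adj P * P = 1\<^sub>m (2^n)" unfolding P(3) adj_smult
    by (simp add: smult_mult_smult[OF adj_carrier[OF pauliXZ_carrier] pauliXZ_carrier] pauliXZ_unitary P c)
  show "P * adj P = 1\<^sub>m (2^n)" unfolding P(3) adj_smult
    by (simp add: smult_mult_smult[OF pauliXZ_carrier adj_carrier[OF pauliXZ_carrier]] pauliXZ_unitary P c mult.commute)
qed

lemma pauli_comm: assumes "P \<in> pauli_group n" "Q \<in> pauli_group n"
  shows "\<exists>s. (s = 1 \<or> s = -1) \<and> P * Q = s \<cdot>\<^sub>m (Q * P)"
proof -
  obtain m x z where P: "x < 2^n" "z < 2^n" "P = \<i> ^ m \<cdot>\<^sub>m pauliXZ n x z" using pauliE[OF assms(1)] by blast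
  obtain m' x' z' where Q: "x' < 2^n" "z' < 2^n" "Q = \<i> ^ m' \<cdot>\<^sub>m pauliXZ n x' z'" using pauliE[OF assms(2)] by blast
  have PQ: "P * Q = (\<i> ^ m * \<i> ^ m' * sg n (and z x')) \<cdot>\<^sub>m pauliXZ n (xor x x') (xor z z')"
    unfolding P(3) Q(3) using P Q by (simp add: smult_mult_smult[OF pauliXZ_carrier pauliXZ_carrier] pauliXZ_mult smult_smult_m)
  have QP: "Q * P = (\<i> ^ m * \<i> ^ m' * sg n (and z' x)) \<cdot>\<^sub>m pauliXZ n (xor x x') (xor z z')"
    unfolding P(3) Q(3) using P Q by (simp add: smult_mult_smult[OF pauliXZ_carrier pauliXZ_carrier] pauliXZ_mult smult_smult_m xor.commute mult.commute)
  define s where "s = sg n (and z x') * sg n (and z' x)"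
  have s: "s = 1 \<or> s = -1" unfolding s_def using sg_cases[of n "and z x'"] sg_cases[of n "and z' x"] by auto
  have "sg n (and z x') * sg n (and z' x) * (\<i> ^ m * \<i> ^ m' * sg n (and z' x)) = \<i> ^ m * \<i> ^ m' * sg n (and z x') * (sg n (and z' x) * sg n (and z' x))"
    by (simp add: ac_simps)
  also have "\<dots> = \<i> ^ m * \<i> ^ m' * sg n (and z x')" by (simp add: sg_sq)
  finally have eq: "s * (\<i> ^ m * \<i> ^ m' * sg n (and z' x)) = \<i> ^ m * \<i> ^ m' * sg n (and z x')"
    unfolding s_def .
  have "P * Q = s \<cdot>\<^sub>m (Q * P)" unfolding PQ QP smult_smult_m eq ..
  then show ?thesis using s by blast
qed

lemma and_pow: "bit (z::nat) i \<Longrightarrow> and z (2^i) = 2^i"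
  by (rule bit_eqI) (auto simp: bit_simps)

lemma popcnt_pow: "i < n \<Longrightarrow> popcnt n (2^i) = 1"
proof -
  assume i: "i < n"
  have "{j. j < n \<and> bit ((2::nat)^i) j} = {i}" using i by (auto simp: bit_exp_iff)
  then show ?thesis unfolding popcnt_def by simp
qed

lemma sg_sum_zero: assumes "z < 2^n" "z \<noteq> 0"
  shows "(\<Sum>a<2^n. sg n (and z a)) = 0"
proof -
  have "\<exists>i. bit z i"
  proof (rule ccontr)
    assume "\<not> (\<exists>i. bit z i)"
    then have "z = 0" by (intro bit_eqI) simp
    then show False using assms(2) by simp
  qed
  then obtain i where bi: "bit z i" by blast
  have i: "i < n" using bit_lt[OF assms(1) bi] .
  have h: "(2::nat)^i < 2^n" using i by simp
  define \<sigma> where "\<sigma> a = xor a ((2::nat)^i)" for a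
  have b: "bij_betw \<sigma> {..<2^n} {..<2^n}"
  proof (rule bij_betw_byWitness[where f' = \<sigma>])
    show "\<forall>a\<in>{..<2 ^ n}. \<sigma> (\<sigma> a) = a" unfolding \<sigma>_def by (simp add: xor_cancel_r)
    show "\<forall>a\<in>{..<2 ^ n}. \<sigma> (\<sigma> a) = a" unfolding \<sigma>_def by (simp add: xor_cancel_r)
    show "\<sigma> ` {..<2 ^ n} \<subseteq> {..<2 ^ n}" unfolding \<sigma>_def using h by (auto simp: xor_lt)
    show "\<sigma> ` {..<2 ^ n} \<subseteq> {..<2 ^ n}" unfolding \<sigma>_def using h by (auto simp: xor_lt)
  qed
  have "(\<Sum>a<2^n. sg n (and z (\<sigma> a))) = (\<Sum>a<2^n. sg n (and z a))"
    by (rule sum.reindex_bij_betw[OF b])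
  moreover have "\<And>a. sg n (and z (\<sigma> a)) = - sg n (and z a)"
    unfolding \<sigma>_def and_xor_distrib1 sg_xor and_pow[OF bi] using popcnt_pow[OF i] by (simp add: sg_def)
  ultimately have "(\<Sum>a<2^n. - sg n (and z a)) = (\<Sum>a<2^n. sg n (and z a))" by simp
  then show ?thesis by (simp add: sum_negf)
qed

lemma pauli_trace: assumes "P \<in> pauli_group n"
  shows "(\<exists>c. P = c \<cdot>\<^sub>m 1\<^sub>m (2^n)) \<or> mtrace P = 0"
proof -
  obtain m x z where P: "x < 2^n" "z < 2^n" "P = \<i> ^ m \<cdot>\<^sub>m pauliXZ n x z" using pauliE[OF assms(1)] by blast
  show ?thesis
  proof (cases "x = 0")
    case x0: True
    show ?thesis
    proof (cases "z = 0")
      case True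
      then show ?thesis using x0 P by (auto simp: pauliXZ_00)
    next
      case False
      have "mtrace P = (\<Sum>a<2^n. \<i> ^ m * sg n (and z a))"
        unfolding mtrace_def P(3) using x0 by (simp add: pauliXZ_index)
      also have "\<dots> = 0" using sg_sum_zero[OF P(2) False] by (simp add: sum_distrib_left[symmetric])
      finally show ?thesis by simp
    qed
  next
    case False
    have "\<And>a. xor a x \<noteq> a"
    proof
      fix a assume "xor a x = a"
      then have "xor a (xor a x) = xor a a" by simp
      then have "x = 0" by (simp add: xor.assoc[symmetric])
      then show False using False by simp
    qed
    then have "\<And>a. a \<noteq> xor a x" by metis
    then have "mtrace P = (\<Sum>a<(2::nat)^n. (0::complex))"
      unfolding mtrace_def P(3) by (intro sum.cong) (simp_all add: pauliXZ_index)
    then show ?thesis by simp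
  qed
qed

lemma smult_cancel: assumes "A \<in> carrier_mat N N" "A \<noteq> 0\<^sub>m N N" "c \<cdot>\<^sub>m A = d \<cdot>\<^sub>m (A::complex mat)"
  shows "c = d"
proof -
  obtain i j where ij: "i < N" "j < N" "A $$ (i,j) \<noteq> 0"
    using assms(1,2) by (metis eq_matI carrier_matD index_zero_mat)
  have "(c \<cdot>\<^sub>m A) $$ (i,j) = (d \<cdot>\<^sub>m A) $$ (i,j)" using assms(3) by simp
  then have "c * A $$ (i,j) = d * A $$ (i,j)" using ij assms(1) by simp
  then show ?thesis using ij(3) by simp
qed

locale qsetup =
  fixes n k :: nat and U :: "nat \<Rightarrow> complex mat"
  assumes n1: "1 \<le> n" and kn: "k < n" and rep: "pauli_rep n k U"
begin

abbreviation "N \<equiv> (2::nat)^n"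
abbreviation "G \<equiv> grp n k"
abbreviation "Pp \<equiv> Ppn n k U"
abbreviation "Pc \<equiv> Pchi n k U"

lemma G_iff: "g \<in> G \<longleftrightarrow> g < 2^(n-k)" unfolding grp_def by simp
lemma G0: "0 \<in> G" unfolding grp_def by simp
lemma G_xor: "g \<in> G \<Longrightarrow> h \<in> G \<Longrightarrow> xor g h \<in> G" unfolding grp_def by (simp add: xor_lt)
lemma G_fin: "finite G" unfolding grp_def by simp
lemma G_card: "card G = 2^(n-k)" unfolding grp_def by simp
lemma G_card_pos: "card G > 0" unfolding G_card by simp

lemma U_pauli: "g \<in> G \<Longrightarrow> U g \<in> pauli_group n" using rep unfolding pauli_rep_def by blast
lemma U_carrier: "g \<in> G \<Longrightarrow> U g \<in> carrier_mat N N" using pauli_carrier U_pauli by blast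
lemma U_mult: "g \<in> G \<Longrightarrow> h \<in> G \<Longrightarrow> U (xor g h) = U g * U h" using rep unfolding pauli_rep_def by blast
lemma U_inj: "inj_on U G" using rep unfolding pauli_rep_def by blast
lemma U_notneg: "g \<in> G \<Longrightarrow> U g \<noteq> - 1\<^sub>m N" using rep unfolding pauli_rep_def by (metis image_eqI)
lemma U_unitary: "g \<in> G \<Longrightarrow> adj (U g) * U g = 1\<^sub>m N" "g \<in> G \<Longrightarrow> U g * adj (U g) = 1\<^sub>m N"
  using pauli_unitary U_pauli by blast+

lemma U0: "U 0 = 1\<^sub>m N"
proof -
  have c: "U 0 \<in> carrier_mat N N" using U_carrier G0 by blast
  have "U 0 = U 0 * U 0" using U_mult[OF G0 G0] by simp
  then have "adj (U 0) * U 0 = adj (U 0) * (U 0 * U 0)" by simp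
  also have "\<dots> = (adj (U 0) * U 0) * U 0" using c by (simp add: assoc_mult_mat[of _ N N _ N _ N])
  finally show ?thesis using U_unitary[OF G0] c by simp
qed

lemma U_sq: "g \<in> G \<Longrightarrow> U g * U g = 1\<^sub>m N"
  using U_mult[of g g] U0 by simp

lemma U_herm: assumes "g \<in> G" shows "adj (U g) = U g"
proof -
  have c: "U g \<in> carrier_mat N N" using U_carrier assms by blast
  have "adj (U g) = adj (U g) * (U g * U g)" using U_sq[OF assms] c by simp
  also have "\<dots> = (adj (U g) * U g) * U g" using c by (simp add: assoc_mult_mat[of _ N N _ N _ N])
  finally show ?thesis using U_unitary[OF assms] c by simp
qed


lemma chars_pm: assumes "\<chi> \<in> chars n k" shows "\<chi> g = 1 \<or> \<chi> g = -1"
proof (cases "g \<in> G")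
  case True
  then show ?thesis using assms unfolding chars_def by blast
next
  case False
  then show ?thesis using assms unfolding chars_def by blast
qed

lemma chars_mult: "\<chi> \<in> chars n k \<Longrightarrow> g \<in> G \<Longrightarrow> h \<in> G \<Longrightarrow> \<chi> (xor g h) = \<chi> g * \<chi> h"
  unfolding chars_def by blast

lemma chars_out: "\<chi> \<in> chars n k \<Longrightarrow> g \<notin> G \<Longrightarrow> \<chi> g = 1"
  unfolding chars_def by blast

lemma chars_sq: assumes "\<chi> \<in> chars n k" shows "\<chi> g * \<chi> g = 1"
  using chars_pm[OF assms, of g] by auto

lemma chars_cnj[simp]: assumes "\<chi> \<in> chars n k" shows "cnj (\<chi> g) = \<chi> g"
  using chars_pm[OF assms, of g] by auto

lemma chars_0: "\<chi> \<in> chars n k \<Longrightarrow> \<chi> 0 = 1"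
  using chars_mult[OF _ G0 G0, of \<chi>] chars_pm[of \<chi> 0] by auto

lemma triv_chars: "triv_char \<in> chars n k"
  unfolding chars_def triv_char_def by simp

lemma chars_prod: assumes "\<chi> \<in> chars n k" "\<psi> \<in> chars n k"
  shows "(\<lambda>g. \<chi> g * \<psi> g) \<in> chars n k"
proof -
  have "\<chi> g * \<psi> g = 1 \<or> \<chi> g * \<psi> g = -1" for g
    using chars_pm[OF assms(1), of g] chars_pm[OF assms(2), of g] by auto
  then have "\<forall>g\<in>G. \<chi> g * \<psi> g = 1 \<or> \<chi> g * \<psi> g = -1" by blast
  moreover have "\<forall>g\<in>G. \<forall>h\<in>G. \<chi> (xor g h) * \<psi> (xor g h) = \<chi> g * \<psi> g * (\<chi> h * \<psi> h)"
    using chars_mult[OF assms(1)] chars_mult[OF assms(2)] by (simp add: ac_simps)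
  moreover have "\<forall>g. g \<notin> G \<longrightarrow> \<chi> g * \<psi> g = 1"
    using chars_out[OF assms(1)] chars_out[OF assms(2)] by simp
  ultimately show ?thesis unfolding chars_def by blast
qed

lemma chars_eqI: assumes "\<chi> \<in> chars n k" "\<psi> \<in> chars n k" "\<And>g. g \<in> G \<Longrightarrow> \<chi> g = \<psi> g"
  shows "\<chi> = \<psi>"
proof
  fix g show "\<chi> g = \<psi> g"
    using assms chars_out[OF assms(1)] chars_out[OF assms(2)] by (cases "g \<in> G") auto
qed

lemma chars_prod_triv: assumes "\<chi> \<in> chars n k" "\<psi> \<in> chars n k"
  shows "((\<lambda>g. \<chi> g * \<psi> g) = triv_char) \<longleftrightarrow> \<chi> = \<psi>"
proof
  assume "(\<lambda>g. \<chi> g * \<psi> g) = triv_char"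
  then have e: "\<And>g. \<chi> g * \<psi> g = 1" unfolding triv_char_def by (metis (no_types))
  show "\<chi> = \<psi>"
  proof
    fix g
    have "\<chi> g = \<chi> g * (\<psi> g * \<psi> g)" using chars_sq[OF assms(2), of g] by simp
    also have "\<dots> = (\<chi> g * \<psi> g) * \<psi> g" by (simp add: ac_simps)
    also have "\<dots> = \<psi> g" using e[of g] by simp
    finally show "\<chi> g = \<psi> g" .
  qed
next
  assume "\<chi> = \<psi>"
  then show "(\<lambda>g. \<chi> g * \<psi> g) = triv_char" using chars_sq[OF assms(2)] unfolding triv_char_def by simp
qed

lemma xor_bij: "h \<in> G \<Longrightarrow> bij_betw (\<lambda>g. xor h g) G G"
proof (rule bij_betw_byWitness[where f' = "\<lambda>g. xor h g"])
  assume h: "h \<in> G"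
  show "\<forall>a\<in>G. xor h (xor h a) = a" by (simp add: xor.assoc[symmetric])
  show "\<forall>a\<in>G. xor h (xor h a) = a" by (simp add: xor.assoc[symmetric])
  show "(\<lambda>g. xor h g) ` G \<subseteq> G" using h G_xor by blast
  show "(\<lambda>g. xor h g) ` G \<subseteq> G" using h G_xor by blast
qed

lemma char_sum: assumes "\<chi> \<in> chars n k"
  shows "(\<Sum>g\<in>G. \<chi> g) = (if \<chi> = triv_char then of_nat (card G) else 0)"
proof (cases "\<chi> = triv_char")
  case True
  then show ?thesis unfolding triv_char_def by simp
next
  case False
  have "\<exists>h\<in>G. \<chi> h \<noteq> 1"
  proof (rule ccontr)
    assume "\<not> (\<exists>h\<in>G. \<chi> h \<noteq> 1)"
    then have "\<chi> = triv_char" using chars_eqI[OF assms triv_chars] unfolding triv_char_def by blast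
    then show False using False by simp
  qed
  then obtain h where h: "h \<in> G" "\<chi> h = -1" using chars_pm[OF assms] by blast
  have "(\<Sum>g\<in>G. \<chi> (xor h g)) = (\<Sum>g\<in>G. \<chi> g)"
    by (rule sum.reindex_bij_betw[OF xor_bij[OF h(1)]])
  moreover have "\<And>g. g \<in> G \<Longrightarrow> \<chi> (xor h g) = - \<chi> g" using chars_mult[OF assms h(1)] h(2) by simp
  moreover have "(\<Sum>g\<in>G. \<chi> (xor h g)) = (\<Sum>g\<in>G. - \<chi> g)"
    by (rule sum.cong) (simp_all add: chars_mult[OF assms h(1)] h(2))
  ultimately have "(\<Sum>g\<in>G. - \<chi> g) = (\<Sum>g\<in>G. \<chi> g)" by simp
  then have "(\<Sum>g\<in>G. \<chi> g) = 0" by (simp add: sum_negf)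
  then show ?thesis using False by simp
qed

lemma char_orth: assumes "\<chi> \<in> chars n k" "\<psi> \<in> chars n k"
  shows "(\<Sum>g\<in>G. \<chi> g * \<psi> g) = (if \<chi> = \<psi> then of_nat (card G) else 0)"
  using char_sum[OF chars_prod[OF assms]] chars_prod_triv[OF assms] by simp

end

context qsetup begin

lemma set_upt_G: "set [0..<2^(n-k)] = G" unfolding grp_def by auto

lemma Pc_MS: "Pc \<chi> = MS N (\<lambda>g. (\<chi> g / of_nat (card G)) \<cdot>\<^sub>m U g) G"
proof -
  have "\<And>x. x \<in> set [0..<2^(n-k)] \<Longrightarrow> \<chi> x \<cdot>\<^sub>m U x \<in> carrier_mat N N"
    unfolding set_upt_G using U_carrier by simp
  then have "msum N (map (\<lambda>g. \<chi> g \<cdot>\<^sub>m U g) [0..<2^(n-k)]) = MS N (\<lambda>g. \<chi> g \<cdot>\<^sub>m U g) (set [0..<2^(n-k)])"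
    by (intro msum_MS) simp_all
  then have "msum N (map (\<lambda>g. \<chi> g \<cdot>\<^sub>m U g) [0..<2^(n-k)]) = MS N (\<lambda>g. \<chi> g \<cdot>\<^sub>m U g) G"
    unfolding set_upt_G .
  then have "Pc \<chi> = (1 / of_nat (card G)) \<cdot>\<^sub>m MS N (\<lambda>g. \<chi> g \<cdot>\<^sub>m U g) G"
    unfolding Pchi_def by simp
  also have "\<dots> = MS N (\<lambda>g. (1 / of_nat (card G)) \<cdot>\<^sub>m (\<chi> g \<cdot>\<^sub>m U g)) G"
    by (rule MS_smult) (simp add: U_carrier)
  also have "\<dots> = MS N (\<lambda>g. (\<chi> g / of_nat (card G)) \<cdot>\<^sub>m U g) G"
    by (rule MS_cong) (simp add: smult_smult_m)
  finally show ?thesis .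
qed

lemma Pp_eq: "Pp = Pc triv_char"
  unfolding Ppn_def Pchi_def triv_char_def by simp

lemma Pc_carrier[simp]: "Pc \<chi> \<in> carrier_mat N N"
  unfolding Pc_MS by simp

lemma Pc_dim[simp]: "dim_row (Pc \<chi>) = N" "dim_col (Pc \<chi>) = N"
  using carrier_matD[OF Pc_carrier[of \<chi>]] by simp_all

lemma Pp_carrier[simp]: "Pp \<in> carrier_mat N N"
  unfolding Pp_eq by simp

lemma U_Pc: assumes h: "h \<in> G" and c: "\<chi> \<in> chars n k"
  shows "U h * Pc \<chi> = \<chi> h \<cdot>\<^sub>m Pc \<chi>"
proof -
  have "U h * Pc \<chi> = MS N (\<lambda>g. U h * ((\<chi> g / of_nat (card G)) \<cdot>\<^sub>m U g)) G"
    unfolding Pc_MS by (rule MS_mult_left) (simp_all add: U_carrier h)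
  also have "\<dots> = MS N (\<lambda>g. (\<chi> g / of_nat (card G)) \<cdot>\<^sub>m U (xor h g)) G"
    by (rule MS_cong) (simp add: mult_smult_distrib[of _ N N _ N] U_carrier h U_mult)
  also have "\<dots> = MS N (\<lambda>g. (\<chi> (xor h g) * \<chi> h / of_nat (card G)) \<cdot>\<^sub>m U (xor h g)) G"
  proof (rule MS_cong)
    fix g assume g: "g \<in> G"
    have "\<chi> (xor h g) * \<chi> h = \<chi> g"
      using chars_mult[OF c h g] chars_sq[OF c, of h] by (simp add: ac_simps)
    then show "(\<chi> g / of_nat (card G)) \<cdot>\<^sub>m U (xor h g) = (\<chi> (xor h g) * \<chi> h / of_nat (card G)) \<cdot>\<^sub>m U (xor h g)"
      by simp
  qed
  also have "\<dots> = MS N (\<lambda>g. (\<chi> g * \<chi> h / of_nat (card G)) \<cdot>\<^sub>m U g) G"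
    by (rule MS_reindex[OF xor_bij[OF h], where f = "\<lambda>g. (\<chi> g * \<chi> h / of_nat (card G)) \<cdot>\<^sub>m U g"])
  also have "\<dots> = MS N (\<lambda>g. \<chi> h \<cdot>\<^sub>m ((\<chi> g / of_nat (card G)) \<cdot>\<^sub>m U g)) G"
    by (rule MS_cong) (simp add: smult_smult_m ac_simps)
  also have "\<dots> = \<chi> h \<cdot>\<^sub>m Pc \<chi>"
    unfolding Pc_MS by (rule MS_smult[symmetric]) (simp add: U_carrier)
  finally show ?thesis .
qed

lemma Pc_herm: assumes c: "\<chi> \<in> chars n k" shows "adj (Pc \<chi>) = Pc \<chi>"
proof -
  have "adj (Pc \<chi>) = MS N (\<lambda>g. adj ((\<chi> g / of_nat (card G)) \<cdot>\<^sub>m U g)) G"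
    unfolding Pc_MS by (rule MS_adj) (simp add: U_carrier)
  also have "\<dots> = Pc \<chi>" unfolding Pc_MS
    by (rule MS_cong) (simp add: adj_smult U_herm c)
  finally show ?thesis .
qed

lemma Pc_U: assumes h: "h \<in> G" and c: "\<chi> \<in> chars n k"
  shows "Pc \<chi> * U h = \<chi> h \<cdot>\<^sub>m Pc \<chi>"
proof -
  have "adj (U h * Pc \<chi>) = adj (\<chi> h \<cdot>\<^sub>m Pc \<chi>)" using U_Pc[OF h c] by simp
  then show ?thesis
    using adj_mult[OF U_carrier[OF h] Pc_carrier, of \<chi>] by (simp add: adj_smult Pc_herm[OF c] U_herm[OF h] c)
qed

lemma Pc_Pc: assumes c: "\<chi> \<in> chars n k" "\<psi> \<in> chars n k"
  shows "Pc \<chi> * Pc \<psi> = (if \<chi> = \<psi> then Pc \<psi> else 0\<^sub>m N N)"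
proof -
  have "Pc \<chi> * Pc \<psi> = MS N (\<lambda>g. ((\<chi> g / of_nat (card G)) \<cdot>\<^sub>m U g) * Pc \<psi>) G"
    unfolding Pc_MS[of \<chi>] by (rule MS_mult_right) (simp_all add: U_carrier)
  also have "\<dots> = MS N (\<lambda>g. (\<chi> g * \<psi> g / of_nat (card G)) \<cdot>\<^sub>m Pc \<psi>) G"
    by (rule MS_cong) (simp add: mult_smult_assoc_mat[of _ N N _ N] U_carrier U_Pc c smult_smult_m)
  also have "\<dots> = (\<Sum>g\<in>G. \<chi> g * \<psi> g / of_nat (card G)) \<cdot>\<^sub>m Pc \<psi>"
    by (rule MS_scal) simp
  also have "(\<Sum>g\<in>G. \<chi> g * \<psi> g / of_nat (card G)) = (if \<chi> = \<psi> then 1 else 0)"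
    using char_orth[OF c] G_card_pos by (simp add: sum_divide_distrib[symmetric])
  finally show ?thesis by simp
qed

lemma Pc_X: assumes X: "X \<in> carrier_mat N N" and c: "\<chi> \<in> chars n k" "\<psi> \<in> chars n k"
  and comm: "\<And>g. g \<in> G \<Longrightarrow> U g * X = \<chi> g \<cdot>\<^sub>m (X * U g)"
  shows "Pc \<psi> * X = X * Pc (\<lambda>g. \<psi> g * \<chi> g)"
proof -
  have "Pc \<psi> * X = MS N (\<lambda>g. ((\<psi> g / of_nat (card G)) \<cdot>\<^sub>m U g) * X) G"
    unfolding Pc_MS[of \<psi>] by (rule MS_mult_right) (simp_all add: U_carrier X)
  also have "\<dots> = MS N (\<lambda>g. X * ((\<psi> g * \<chi> g / of_nat (card G)) \<cdot>\<^sub>m U g)) G"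
  proof (rule MS_cong)
    fix g assume g: "g \<in> G"
    have "((\<psi> g / of_nat (card G)) \<cdot>\<^sub>m U g) * X = (\<psi> g / of_nat (card G)) \<cdot>\<^sub>m (U g * X)"
      using mult_smult_assoc_mat[OF U_carrier[OF g] X] by simp
    also have "\<dots> = (\<psi> g / of_nat (card G)) \<cdot>\<^sub>m (\<chi> g \<cdot>\<^sub>m (X * U g))" using comm[OF g] by simp
    also have "\<dots> = X * ((\<psi> g * \<chi> g / of_nat (card G)) \<cdot>\<^sub>m U g)"
      using mult_smult_distrib[OF X U_carrier[OF g]] by (simp add: smult_smult_m)
    finally show "((\<psi> g / of_nat (card G)) \<cdot>\<^sub>m U g) * X = X * ((\<psi> g * \<chi> g / of_nat (card G)) \<cdot>\<^sub>m U g)" .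
  qed
  also have "\<dots> = X * Pc (\<lambda>g. \<psi> g * \<chi> g)"
    unfolding Pc_MS[of "\<lambda>g. \<psi> g * \<chi> g"] by (rule MS_mult_left[symmetric]) (simp_all add: U_carrier X)
  finally show ?thesis .
qed

lemma PXPp: assumes X: "X \<in> carrier_mat N N" and c: "\<chi> \<in> chars n k" "\<psi> \<in> chars n k"
  and comm: "\<And>g. g \<in> G \<Longrightarrow> U g * X = \<chi> g \<cdot>\<^sub>m (X * U g)"
  shows "Pc \<psi> * X * Pp = (if \<psi> = \<chi> then X * Pp else 0\<^sub>m N N)"
proof -
  have "Pc \<psi> * X = X * Pc (\<lambda>g. \<psi> g * \<chi> g)" by (rule Pc_X[OF assms])
  then have "Pc \<psi> * X * Pp = X * Pc (\<lambda>g. \<psi> g * \<chi> g) * Pc triv_char"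
    by (simp add: Pp_eq)
  also have "\<dots> = X * (Pc (\<lambda>g. \<psi> g * \<chi> g) * Pc triv_char)"
    using X by (simp add: assoc_mult_mat[of _ N N _ N _ N])
  also have "\<dots> = (if \<psi> = \<chi> then X * Pp else 0\<^sub>m N N)"
    using Pc_Pc[OF chars_prod[OF c(2) c(1)] triv_chars] chars_prod_triv[OF c(2) c(1)] X
    by (simp add: Pp_eq)
  finally show ?thesis .
qed

end

lemma neg_smult_m: "(-1::complex) \<cdot>\<^sub>m A = - A"
  by (rule eq_matI) simp_all

lemma mtrace_MS: assumes "finite S" "\<And>x. x \<in> S \<Longrightarrow> f x \<in> carrier_mat N N"
  shows "mtrace (MS N f S) = (\<Sum>x\<in>S. mtrace (f x))"
proof -
  have "mtrace (MS N f S) = (\<Sum>i<N. \<Sum>x\<in>S. f x $$ (i,i))" unfolding mtrace_def by simp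
  also have "\<dots> = (\<Sum>x\<in>S. \<Sum>i<N. f x $$ (i,i))" by (rule sum.swap)
  also have "\<dots> = (\<Sum>x\<in>S. mtrace (f x))"
  proof (rule sum.cong)
    fix x assume "x \<in> S"
    then have "dim_row (f x) = N" using assms(2) by blast
    then show "(\<Sum>i<N. f x $$ (i,i)) = mtrace (f x)" unfolding mtrace_def by simp
  qed simp
  finally show ?thesis .
qed

lemma mtrace_smult: assumes "A \<in> carrier_mat N N" shows "mtrace (c \<cdot>\<^sub>m A) = c * mtrace A"
proof -
  have d: "dim_row A = N" "dim_col A = N" using assms by auto
  show ?thesis unfolding mtrace_def sum_distrib_left using d by simp
qed

lemma mtrace_one: "mtrace (1\<^sub>m N) = of_nat N"
  unfolding mtrace_def by simp

lemma pauli_nonzero: assumes "E \<in> pauli_group n" "1 \<le> n" shows "E \<noteq> 0\<^sub>m (2^n) (2^n)"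
proof
  assume "E = 0\<^sub>m (2^n) (2^n)"
  then have "1\<^sub>m (2^n) = (0\<^sub>m (2^n) (2^n) :: complex mat)" using pauli_unitary(1)[OF assms(1)] by simp
  then have "(1\<^sub>m (2^n) :: complex mat) $$ (0,0) = (0\<^sub>m (2^n) (2^n) :: complex mat) $$ (0,0)" by simp
  then show False by simp
qed

context qsetup begin

lemma Pp_herm: "adj Pp = Pp" unfolding Pp_eq using Pc_herm triv_chars by simp
lemma Pp_idem: "Pp * Pp = Pp" unfolding Pp_eq using Pc_Pc[OF triv_chars triv_chars] by simp
lemma Pp_dim[simp]: "dim_row Pp = N" "dim_col Pp = N" unfolding Pp_eq by simp_all

lemma one_nonzero: "1\<^sub>m N \<noteq> (0\<^sub>m N N :: complex mat)"
proof
  assume "1\<^sub>m N = (0\<^sub>m N N :: complex mat)"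
  then have "(1\<^sub>m N :: complex mat) $$ (0,0) = (0\<^sub>m N N :: complex mat) $$ (0,0)" by simp
  then show False by simp
qed

lemma U_trace: assumes g: "g \<in> G" "g \<noteq> 0" shows "mtrace (U g) = 0"
proof -
  have "(\<exists>c. U g = c \<cdot>\<^sub>m 1\<^sub>m N) \<or> mtrace (U g) = 0" using pauli_trace[OF U_pauli[OF g(1)]] .
  moreover have "\<not> (\<exists>c. U g = c \<cdot>\<^sub>m 1\<^sub>m N)"
  proof
    assume "\<exists>c. U g = c \<cdot>\<^sub>m 1\<^sub>m N"
    then obtain c where c: "U g = c \<cdot>\<^sub>m 1\<^sub>m N" by blast
    have "(c * c) \<cdot>\<^sub>m 1\<^sub>m N = 1 \<cdot>\<^sub>m (1\<^sub>m N :: complex mat)"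
      using U_sq[OF g(1)] unfolding c by (simp add: smult_mult_smult[of _ N] )
    then have "c * c = 1" using smult_cancel[OF one_carrier_mat one_nonzero] by blast
    then have "c = 1 \<or> c = -1"
      by (metis (no_types, lifting) add.inverse_inverse mult_cancel_left mult_minus1 square_eq_1_iff)
    then show False
    proof
      assume "c = 1"
      then have "U g = U 0" using c U0 by simp
      then show False using U_inj g G0 unfolding inj_on_def by blast
    next
      assume "c = -1"
      then have "U g = - 1\<^sub>m N" using c neg_smult_m by simp
      then show False using U_notneg[OF g(1)] by simp
    qed
  qed
  ultimately show ?thesis by blast
qed

lemma Pp_trace: "mtrace Pp = of_nat N / of_nat (card G)"
proof -
  have "Pp = MS N (\<lambda>g. (1 / of_nat (card G)) \<cdot>\<^sub>m U g) G"
    unfolding Pp_eq Pc_MS triv_char_def by simp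
  then have "mtrace Pp = (\<Sum>g\<in>G. mtrace ((1 / of_nat (card G)) \<cdot>\<^sub>m U g))"
    using mtrace_MS[OF G_fin, of "\<lambda>g. (1 / of_nat (card G)) \<cdot>\<^sub>m U g" N] U_carrier by simp
  also have "\<dots> = (\<Sum>g\<in>G. if g = 0 then of_nat N / of_nat (card G) else 0)"
    by (rule sum.cong) (simp_all add: mtrace_smult[OF U_carrier] U0 mtrace_one U_trace)
  also have "\<dots> = of_nat N / of_nat (card G)" using G0 G_fin by simp
  finally show ?thesis .
qed

lemma Pp_nonzero: "Pp \<noteq> 0\<^sub>m N N"
proof
  assume "Pp = 0\<^sub>m N N"
  then have "mtrace Pp = 0" unfolding mtrace_def by simp
  then show False using Pp_trace G_card_pos by simp
qed

lemma Cset_pauli: "E \<in> Cset n k U \<chi> \<Longrightarrow> E \<in> pauli_group n" unfolding Cset_def by blast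

lemma Cset_comm: assumes E: "E \<in> Cset n k U \<chi>" and g: "g \<in> G"
  shows "U g * E = \<chi> g \<cdot>\<^sub>m (E * U g)"
proof -
  have Ec: "E \<in> carrier_mat N N" using pauli_carrier Cset_pauli[OF E] by blast
  have Uc: "U g \<in> carrier_mat N N" using U_carrier[OF g] .
  have e: "U g * E * adj (U g) = \<chi> g \<cdot>\<^sub>m E" using E g unfolding Cset_def by blast
  have "U g * E = U g * E * (adj (U g) * U g)" using U_unitary(1)[OF g] Ec Uc by simp
  also have "\<dots> = (U g * E * adj (U g)) * U g" using Ec Uc by (simp add: assocN)
  also have "\<dots> = \<chi> g \<cdot>\<^sub>m (E * U g)" unfolding e using Ec Uc by (simp add: mult_smult_assoc_mat[of _ N N _ N])
  finally show ?thesis .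
qed

lemma conj_mult: assumes g: "g \<in> G" and h: "h \<in> G" and X: "X \<in> carrier_mat N N"
  shows "U (xor g h) * X * adj (U (xor g h)) = U g * (U h * X * adj (U h)) * adj (U g)"
proof -
  have Ug: "U g \<in> carrier_mat N N" and Uh: "U h \<in> carrier_mat N N" using U_carrier g h by auto
  have "adj (U (xor g h)) = adj (U h) * adj (U g)" unfolding U_mult[OF g h] using adj_mult[OF Ug Uh] .
  then show ?thesis unfolding U_mult[OF g h] using Ug Uh X by (simp add: assocN)
qed

lemma pauli_charge: assumes E: "E \<in> pauli_group n"
  shows "\<exists>\<chi>\<in>chars n k. E \<in> Cset n k U \<chi>"
proof -
  have Ec: "E \<in> carrier_mat N N" using pauli_carrier E by blast
  have Enz: "E \<noteq> 0\<^sub>m N N" using pauli_nonzero[OF E n1] .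
  define \<chi> where "\<chi> g = (if g \<in> G then (if U g * E * adj (U g) = E then 1 else -1) else (1::complex))" for g
  have key: "U g * E * adj (U g) = \<chi> g \<cdot>\<^sub>m E" if g: "g \<in> G" for g
  proof -
    have Uc: "U g \<in> carrier_mat N N" using U_carrier[OF g] .
    obtain s where s: "s = 1 \<or> s = -1" "U g * E = s \<cdot>\<^sub>m (E * U g)" using pauli_comm[OF U_pauli[OF g] E] by blast
    have "U g * E * adj (U g) = s \<cdot>\<^sub>m (E * U g * adj (U g))"
      unfolding s(2) using Uc Ec by (simp add: mult_smult_assoc_mat[of _ N N _ N])
    also have "E * U g * adj (U g) = E" using Uc Ec U_unitary(2)[OF g] by (simp add: assocN)
    finally have e: "U g * E * adj (U g) = s \<cdot>\<^sub>m E" .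
    show ?thesis
    proof (cases "s = 1")
      case True
      then show ?thesis using e g unfolding \<chi>_def by simp
    next
      case False
      then have s1: "s = -1" using s by simp
      have "s \<cdot>\<^sub>m E \<noteq> E"
      proof
        assume "s \<cdot>\<^sub>m E = E"
        then have "s \<cdot>\<^sub>m E = 1 \<cdot>\<^sub>m E" by simp
        then have "s = 1" using smult_cancel[OF Ec Enz] by blast
        then show False using s1 by simp
      qed
      then show ?thesis using e g s1 unfolding \<chi>_def by simp
    qed
  qed
  have pm: "\<forall>g\<in>G. \<chi> g = 1 \<or> \<chi> g = -1" unfolding \<chi>_def by simp
  have mult: "\<forall>g\<in>G. \<forall>h\<in>G. \<chi> (xor g h) = \<chi> g * \<chi> h"
  proof (intro ballI)
    fix g h assume g: "g \<in> G" and h: "h \<in> G"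
    have "\<chi> (xor g h) \<cdot>\<^sub>m E = U g * (U h * E * adj (U h)) * adj (U g)"
      using key[OF G_xor[OF g h]] conj_mult[OF g h Ec] by simp
    also have "\<dots> = \<chi> h \<cdot>\<^sub>m (U g * E * adj (U g))"
      unfolding key[OF h] using U_carrier[OF g] Ec
      by (simp add: mult_smult_assoc_mat[of _ N N _ N] mult_smult_distrib[of _ N N _ N])
    also have "\<dots> = (\<chi> g * \<chi> h) \<cdot>\<^sub>m E" unfolding key[OF g] by (simp add: smult_smult_m mult.commute)
    finally show "\<chi> (xor g h) = \<chi> g * \<chi> h" using smult_cancel[OF Ec Enz] by blast
  qed
  have out: "\<forall>g. g \<notin> G \<longrightarrow> \<chi> g = 1" unfolding \<chi>_def by simp
  have "\<chi> \<in> chars n k" unfolding chars_def using pm mult out by blast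
  moreover have "E \<in> Cset n k U \<chi>" unfolding Cset_def using E key by blast
  ultimately show ?thesis by blast
qed

lemma charge_unique: assumes "E \<in> Cset n k U \<chi>" "E \<in> Cset n k U \<psi>" "\<chi> \<in> chars n k" "\<psi> \<in> chars n k"
  shows "\<chi> = \<psi>"
proof (rule chars_eqI[OF assms(3,4)])
  fix g assume g: "g \<in> G"
  have E: "E \<in> pauli_group n" using Cset_pauli[OF assms(1)] .
  have "\<chi> g \<cdot>\<^sub>m E = \<psi> g \<cdot>\<^sub>m E" using assms(1,2) g unfolding Cset_def by auto
  then show "\<chi> g = \<psi> g" using smult_cancel[OF pauli_carrier[OF E] pauli_nonzero[OF E n1]] by blast
qed

end

lemma cnj_mult_self: "cnj z * z = complex_of_real ((cmod z)^2)"
proof -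
  have "cnj z * z = z * cnj z" by (rule mult.commute)
  also have "\<dots> = complex_of_real ((cmod z)^2)" by (rule complex_norm_square[symmetric])
  finally show ?thesis .
qed

lemma zero_gram: assumes X: "X \<in> carrier_mat N M" and z: "adj X * X = 0\<^sub>m M M"
  shows "X = 0\<^sub>m N M"
proof (rule eq_matI)
  fix i j assume ij: "i < dim_row (0\<^sub>m N M :: complex mat)" "j < dim_col (0\<^sub>m N M :: complex mat)"
  then have i: "i < N" and j: "j < M" by simp_all
  have d: "dim_row X = N" "dim_col X = M" using X by auto
  have "(adj X * X) $$ (j,j) = (\<Sum>l<N. cnj (X $$ (l,j)) * X $$ (l,j))"
    using j d by (simp add: scalar_prod_def atLeast0LessThan)
  also have "\<dots> = (\<Sum>l<N. of_real ((cmod (X $$ (l,j)))^2))"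
    by (rule sum.cong) (simp_all add: cnj_mult_self)
  also have "\<dots> = of_real (\<Sum>l<N. (cmod (X $$ (l,j)))^2)"
    by (simp add: of_real_sum)
  finally have "of_real (\<Sum>l<N. (cmod (X $$ (l,j)))^2) = (0::complex)" using z j by simp
  then have "(\<Sum>l<N. (cmod (X $$ (l,j)))^2) = 0" by (simp only: of_real_eq_0_iff)
  then have "\<forall>l\<in>{..<N}. (cmod (X $$ (l,j)))^2 = 0" by (subst sum_nonneg_eq_0_iff[symmetric]) simp_all
  then have "(cmod (X $$ (i,j)))^2 = 0" using i by simp
  then show "X $$ (i,j) = (0\<^sub>m N M :: complex mat) $$ (i,j)" using i j by simp
qed (use X in auto)

lemma zero_diag: assumes X: "X \<in> carrier_mat N M"
  and z: "\<And>j. j < M \<Longrightarrow> (\<Sum>l<N. cnj (X $$ (l,j)) * X $$ (l,j)) = 0"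
  shows "X = 0\<^sub>m N M"
proof (rule zero_gram[OF X])
  show "adj X * X = 0\<^sub>m M M"
  proof (rule eq_matI)
    fix i j assume ij: "i < dim_row (0\<^sub>m M M :: complex mat)" "j < dim_col (0\<^sub>m M M :: complex mat)"
    then have i: "i < M" and j: "j < M" by simp_all
    have d: "dim_row X = N" "dim_col X = M" using X by auto
    show "(adj X * X) $$ (i,j) = (0\<^sub>m M M :: complex mat) $$ (i,j)"
    proof (cases "i = j")
      case True
      then show ?thesis using z[OF j] i j d by (simp add: scalar_prod_def atLeast0LessThan)
    next
      case False
      have "X = 0\<^sub>m N M"
      proof (rule eq_matI)
        fix a b assume "a < dim_row (0\<^sub>m N M :: complex mat)" "b < dim_col (0\<^sub>m N M :: complex mat)"
        then have a: "a < N" and b: "b < M" by simp_all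
        have "(\<Sum>l<N. cnj (X $$ (l,b)) * X $$ (l,b)) = (\<Sum>l<N. of_real ((cmod (X $$ (l,b)))^2))"
          by (rule sum.cong) (simp_all add: cnj_mult_self)
        also have "\<dots> = of_real (\<Sum>l<N. (cmod (X $$ (l,b)))^2)" by (simp add: of_real_sum)
        finally have "of_real (\<Sum>l<N. (cmod (X $$ (l,b)))^2) = (0::complex)" using z[OF b] by simp
        then have "(\<Sum>l<N. (cmod (X $$ (l,b)))^2) = 0" by (simp only: of_real_eq_0_iff)
        then have "\<forall>l\<in>{..<N}. (cmod (X $$ (l,b)))^2 = 0" by (subst sum_nonneg_eq_0_iff[symmetric]) simp_all
        then show "X $$ (a,b) = (0\<^sub>m N M :: complex mat) $$ (a,b)" using a b by simp
      qed (use d in simp_all)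
      then show ?thesis using i j by simp
    qed
  qed (use X in simp_all)
qed

lemma xtrick: assumes A: "A \<in> carrier_mat N N" and S: "S \<in> carrier_mat N N" and Q: "Q \<in> carrier_mat N N"
  and AA: "adj A * A = Q" and SS: "adj S * S = Q" and SA: "adj S * A = \<eta> \<cdot>\<^sub>m Q" and QQ: "adj Q = Q"
  and eta: "cmod \<eta> = 1"
  shows "A = \<eta> \<cdot>\<^sub>m S"
proof -
  have ce: "cnj \<eta> * \<eta> = 1" using eta cnj_mult_self[of \<eta>] by simp
  have AS: "adj A * S = cnj \<eta> \<cdot>\<^sub>m Q"
    using adj_mult[OF adj_carrier[OF S] A] SA by (simp add: adj_smult QQ)
  have dA: "dim_row A = N" "dim_col A = N" and dS: "dim_row S = N" "dim_col S = N"
    and dQ: "dim_row Q = N" "dim_col Q = N" using A S Q by auto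
  define X where "X = mat N N (\<lambda>(i,j). A $$ (i,j) - \<eta> * S $$ (i,j))"
  have Xc: "X \<in> carrier_mat N N" unfolding X_def by simp
  have "X = 0\<^sub>m N N"
  proof (rule zero_diag[OF Xc])
    fix j assume j: "j < N"
    have e1: "(\<Sum>l<N. cnj (A $$ (l,j)) * A $$ (l,j)) = Q $$ (j,j)"
      using arg_cong[OF AA, of "\<lambda>M. M $$ (j,j)"] j dA by (simp add: scalar_prod_def atLeast0LessThan)
    have e2: "(\<Sum>l<N. cnj (S $$ (l,j)) * S $$ (l,j)) = Q $$ (j,j)"
      using arg_cong[OF SS, of "\<lambda>M. M $$ (j,j)"] j dS by (simp add: scalar_prod_def atLeast0LessThan)
    have e3: "(\<Sum>l<N. cnj (S $$ (l,j)) * A $$ (l,j)) = \<eta> * Q $$ (j,j)"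
      using arg_cong[OF SA, of "\<lambda>M. M $$ (j,j)"] j dS dA dQ by (simp add: scalar_prod_def atLeast0LessThan)
    have e4: "(\<Sum>l<N. cnj (A $$ (l,j)) * S $$ (l,j)) = cnj \<eta> * Q $$ (j,j)"
      using arg_cong[OF AS, of "\<lambda>M. M $$ (j,j)"] j dS dA dQ by (simp add: scalar_prod_def atLeast0LessThan)
    have "(\<Sum>l<N. cnj (X $$ (l,j)) * X $$ (l,j)) =
       (\<Sum>l<N. cnj (A $$ (l,j)) * A $$ (l,j) - \<eta> * (cnj (A $$ (l,j)) * S $$ (l,j))
          - cnj \<eta> * (cnj (S $$ (l,j)) * A $$ (l,j)) + cnj \<eta> * \<eta> * (cnj (S $$ (l,j)) * S $$ (l,j)))"
      by (rule sum.cong) (simp_all add: X_def j algebra_simps)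
    also have "\<dots> = (\<Sum>l<N. cnj (A $$ (l,j)) * A $$ (l,j)) - \<eta> * (\<Sum>l<N. cnj (A $$ (l,j)) * S $$ (l,j))
          - cnj \<eta> * (\<Sum>l<N. cnj (S $$ (l,j)) * A $$ (l,j)) + cnj \<eta> * \<eta> * (\<Sum>l<N. cnj (S $$ (l,j)) * S $$ (l,j))"
      by (simp add: sum.distrib sum_subtractf sum_distrib_left)
    also have "\<dots> = 0" unfolding e1 e2 e3 e4 using ce by (simp add: algebra_simps)
    finally show "(\<Sum>l<N. cnj (X $$ (l,j)) * X $$ (l,j)) = 0" .
  qed
  show ?thesis
  proof (rule eq_matI)
    fix i j assume "i < dim_row (\<eta> \<cdot>\<^sub>m S)" "j < dim_col (\<eta> \<cdot>\<^sub>m S)"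
    then have ij: "i < N" "j < N" using dS by auto
    have "X $$ (i,j) = 0" using \<open>X = 0\<^sub>m N N\<close> ij by simp
    then show "A $$ (i,j) = (\<eta> \<cdot>\<^sub>m S) $$ (i,j)" unfolding X_def using ij dS by simp
  qed (use dA dS in simp_all)
qed

lemma clear_bit_less: assumes "bit (g::nat) i" shows "xor g (2^i) < g" "xor (xor g (2^i)) (2^i) = g"
proof -
  have "xor g (2^i) + 2^i = or (xor g (2^i)) (2^i)"
    by (rule disjunctive_add) (use assms in \<open>auto simp: bit_simps\<close>)
  also have "\<dots> = g"
  proof (rule bit_eqI)
    fix m show "bit (or (xor g (2^i)) (2^i)) m = bit g m" using assms by (auto simp: bit_simps)
  qed
  finally have e: "xor g (2^i) + 2^i = g" .
  then show "xor g (2^i) < g" by (metis less_add_same_cancel1 zero_less_numeral zero_less_power)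
  show "xor (xor g (2^i)) (2^i) = g" by (simp add: xor.assoc)
qed

context qsetup begin

lemma chars_finite: "finite (chars n k)"
proof (rule inj_on_finite[where f = "\<lambda>\<chi>. restrict \<chi> G" and B = "PiE G (\<lambda>_. {1, -1})"])
  show "inj_on (\<lambda>\<chi>. restrict \<chi> G) (chars n k)"
  proof (rule inj_onI)
    fix \<chi> \<psi> assume c: "\<chi> \<in> chars n k" "\<psi> \<in> chars n k" and e: "restrict \<chi> G = restrict \<psi> G"
    show "\<chi> = \<psi>"
    proof (rule chars_eqI[OF c])
      fix g assume "g \<in> G" then show "\<chi> g = \<psi> g" using e by (metis restrict_apply')
    qed
  qed
  show "(\<lambda>\<chi>. restrict \<chi> G) ` chars n k \<subseteq> PiE G (\<lambda>_. {1, -1})"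
    using chars_pm by fastforce
  show "finite (PiE G (\<lambda>_. {1, -1 :: complex}))" using G_fin by (intro finite_PiE) simp_all
qed

lemma chars_det: assumes c: "\<chi> \<in> chars n k" "\<psi> \<in> chars n k"
  and e: "\<And>i. i < n - k \<Longrightarrow> \<chi> (2^i) = \<psi> (2^i)"
  shows "\<chi> = \<psi>"
proof (rule chars_eqI[OF c])
  fix g show "g \<in> G \<Longrightarrow> \<chi> g = \<psi> g"
  proof (induction g rule: less_induct)
    case (less g)
    show ?case
    proof (cases "g = 0")
      case True
      then show ?thesis using chars_0[OF c(1)] chars_0[OF c(2)] by simp
    next
      case False
      have "\<exists>i. bit g i"
      proof (rule ccontr)
        assume "\<not> (\<exists>i. bit g i)"
        then have "g = 0" by (intro bit_eqI) simp
        then show False using False by simp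
      qed
      then obtain i where bi: "bit g i" by blast
      have gl: "g < 2^(n-k)" using less.prems G_iff by simp
      have i: "i < n - k" using bit_lt[OF gl bi] .
      have pG: "2^i \<in> G" unfolding G_iff using i by simp
      have g'G: "xor g (2^i) \<in> G" using G_xor[OF less.prems pG] .
      have IH: "\<chi> (xor g (2^i)) = \<psi> (xor g (2^i))" using less.IH[OF clear_bit_less(1)[OF bi] g'G] .
      have "\<chi> g = \<chi> (xor (xor g (2^i)) (2^i))" using clear_bit_less(2)[OF bi] by simp
      also have "\<dots> = \<chi> (xor g (2^i)) * \<chi> (2^i)" using chars_mult[OF c(1) g'G pG] .
      also have "\<dots> = \<psi> (xor g (2^i)) * \<psi> (2^i)" using IH e[OF i] by simp
      also have "\<dots> = \<psi> (xor (xor g (2^i)) (2^i))" using chars_mult[OF c(2) g'G pG] by simp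
      also have "\<dots> = \<psi> g" using clear_bit_less(2)[OF bi] by simp
      finally show ?thesis .
    qed
  qed
qed

lemma chars_card: "card (chars n k) \<le> 2^(n-k)"
proof -
  let ?f = "\<lambda>\<chi>. restrict (\<lambda>i. \<chi> (2^i)) {..<n-k}"
  let ?B = "PiE {..<n-k} (\<lambda>_. {1, -1 :: complex})"
  have inj: "inj_on ?f (chars n k)"
  proof (rule inj_onI)
    fix \<chi> \<psi> assume c: "\<chi> \<in> chars n k" "\<psi> \<in> chars n k" and e: "?f \<chi> = ?f \<psi>"
    show "\<chi> = \<psi>"
    proof (rule chars_det[OF c])
      fix i assume "i < n - k"
      then show "\<chi> (2^i) = \<psi> (2^i)" using fun_cong[OF e, of i] by simp
    qed
  qed
  have sub: "?f ` chars n k \<subseteq> ?B"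
  proof (rule image_subsetI)
    fix \<chi> assume c: "\<chi> \<in> chars n k"
    show "?f \<chi> \<in> ?B" unfolding PiE_iff using chars_pm[OF c] by auto
  qed
  have "card (chars n k) \<le> card ?B" by (rule card_inj_on_le[OF inj sub]) (simp add: finite_PiE)
  also have "card ?B = 2^(n-k)" by (simp add: card_PiE numeral_2_eq_2)
  finally show ?thesis .
qed

end

lemma sandwich: assumes S: "S \<in> carrier_mat N N" and r: "r \<in> carrier_mat N N"
  shows "adj S * (a \<cdot>\<^sub>m S) * r * adj (a \<cdot>\<^sub>m S) * S = (cnj a * a) \<cdot>\<^sub>m (adj S * S * r * (adj S * S))"
  using S r by (simp add: adj_smult mult_smult_assoc_mat[of _ N N _ N] mult_smult_distrib[of _ N N _ N]
      smult_smult_m assocN[of _ N] mult.commute)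

context qsetup begin

lemma assocL: "A \<in> carrier_mat N N \<Longrightarrow> B \<in> carrier_mat N N \<Longrightarrow> C \<in> carrier_mat N N \<Longrightarrow> A * B * C = A * (B * (C::complex mat))"
  by (rule assoc_mult_mat)

definition Sf :: "((nat \<Rightarrow> complex) \<Rightarrow> complex mat) \<Rightarrow> (nat \<Rightarrow> complex) \<Rightarrow> complex mat" where
  "Sf R \<chi> = (if \<chi> = triv_char then Pp else R \<chi>)"

lemma Sf_props: assumes R: "complete_frames n k U R" and c: "\<chi> \<in> chars n k"
  shows "Sf R \<chi> \<in> carrier_mat N N" "adj (Sf R \<chi>) * Sf R \<chi> = Pp" "Pc \<chi> * Sf R \<chi> = Sf R \<chi>"
proof -
  have "Sf R \<chi> \<in> carrier_mat N N \<and> adj (Sf R \<chi>) * Sf R \<chi> = Pp \<and> Pc \<chi> * Sf R \<chi> = Sf R \<chi>"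
  proof (cases "\<chi> = triv_char")
    case True
    then show ?thesis unfolding Sf_def using Pp_herm Pp_idem Pp_eq by simp
  next
    case False
    then have "frame_field n k U \<chi> (R \<chi>)" using R c unfolding complete_frames_def by blast
    then show ?thesis unfolding Sf_def frame_field_def using False by simp
  qed
  then show "Sf R \<chi> \<in> carrier_mat N N" "adj (Sf R \<chi>) * Sf R \<chi> = Pp" "Pc \<chi> * Sf R \<chi> = Sf R \<chi>" by simp_all
qed

lemma Pc_Sf: assumes R: "complete_frames n k U R" and c: "\<chi> \<in> chars n k" "\<psi> \<in> chars n k"
  shows "Pc \<psi> * Sf R \<chi> = (if \<psi> = \<chi> then Sf R \<chi> else 0\<^sub>m N N)"
proof -
  have "Pc \<psi> * Sf R \<chi> = Pc \<psi> * (Pc \<chi> * Sf R \<chi>)" using Sf_props[OF R c(1)] by simp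
  also have "\<dots> = (Pc \<psi> * Pc \<chi>) * Sf R \<chi>" by (rule sym, rule assocL) (simp_all add: Sf_props[OF R c(1)])
  also have "\<dots> = (if \<psi> = \<chi> then Sf R \<chi> else 0\<^sub>m N N)"
    using Pc_Pc[OF c(2) c(1)] Sf_props[OF R c(1)] by simp
  finally show ?thesis .
qed

lemma adjSf_Pc: assumes R: "complete_frames n k U R" and c: "\<chi> \<in> chars n k"
  shows "adj (Sf R \<chi>) * Pc \<chi> = adj (Sf R \<chi>)"
proof -
  have "adj (Pc \<chi> * Sf R \<chi>) = adj (Sf R \<chi>)" using Sf_props[OF R c] by simp
  then show ?thesis using adj_mult[OF Pc_carrier Sf_props(1)[OF R c]] Pc_herm[OF c] by simp
qed

lemma chars_insert: "chars n k = insert triv_char (chars n k - {triv_char})"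
  using triv_chars by blast

lemma channel_MS: assumes R: "complete_frames n k U R" and X: "X \<in> carrier_mat N N"
  shows "channelO n k U R X = MS N (\<lambda>\<chi>. adj (Sf R \<chi>) * Pc \<chi> * X * Pc \<chi> * Sf R \<chi>) (chars n k)"
proof -
  let ?T = "\<lambda>\<chi>. adj (Sf R \<chi>) * Pc \<chi> * X * Pc \<chi> * Sf R \<chi>"
  have Tc: "?T \<chi> \<in> carrier_mat N N" if "\<chi> \<in> chars n k" for \<chi>
    using Sf_props(1)[OF R that] X by simp
  have "msumS N (\<lambda>\<chi>. adj (R \<chi>) * Pc \<chi> * X * Pc \<chi> * R \<chi>) (chars n k - {triv_char})
      = MS N (\<lambda>\<chi>. adj (R \<chi>) * Pc \<chi> * X * Pc \<chi> * R \<chi>) (chars n k - {triv_char})"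
  proof (rule msumS_MS)
    show "finite (chars n k - {triv_char})" using chars_finite by simp
    fix \<chi> assume "\<chi> \<in> chars n k - {triv_char}"
    then show "adj (R \<chi>) * Pc \<chi> * X * Pc \<chi> * R \<chi> \<in> carrier_mat N N"
      using Tc[of \<chi>] unfolding Sf_def by simp
  qed
  also have "\<dots> = MS N ?T (chars n k - {triv_char})"
    by (rule MS_cong) (simp add: Sf_def)
  finally have e: "channelO n k U R X = Pp * X * Pp + MS N ?T (chars n k - {triv_char})"
    unfolding channelO_def by simp
  have t: "?T triv_char = Pp * X * Pp"
    unfolding Sf_def using X Pp_herm Pp_idem Pp_eq[symmetric]
    by (simp add: assocL)
  have "MS N ?T (chars n k) = ?T triv_char + MS N ?T (chars n k - {triv_char})"
    by (subst chars_insert, rule MS_insert) (use chars_finite Tc triv_chars in simp_all)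
  then show ?thesis using e t by simp
qed

end

context qsetup begin

definition hypE :: "((nat \<Rightarrow> complex) \<Rightarrow> complex mat) \<Rightarrow> complex mat set \<Rightarrow> bool" where
  "hypE R Es \<longleftrightarrow> (\<forall>E\<in>Es. (E \<in> Cset n k U triv_char \<longrightarrow>
                        (\<exists>\<eta>. cmod \<eta> = 1 \<and> E * Ppn n k U = \<eta> \<cdot>\<^sub>m Ppn n k U)) \<and>
                     (\<forall>\<chi>\<in>chars n k - {triv_char}. E \<in> Cset n k U \<chi> \<longrightarrow>
                        (\<exists>\<eta>. cmod \<eta> = 1 \<and> adj (R \<chi>) * E * Ppn n k U = \<eta> \<cdot>\<^sub>m Ppn n k U)))"

lemma Sf_dim: assumes R: "complete_frames n k U R" and c: "\<chi> \<in> chars n k"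
  shows "dim_row (Sf R \<chi>) = N" "dim_col (Sf R \<chi>) = N"
  using carrier_matD[OF Sf_props(1)[OF R c]] by simp_all

lemma E_Pp: assumes R: "complete_frames n k U R" and Es: "Es \<subseteq> pauli_group n" and h: "hypE R Es"
  and E: "E \<in> Es" and c: "\<chi> \<in> chars n k" and EC: "E \<in> Cset n k U \<chi>"
  shows "\<exists>\<eta>. E * Pp = \<eta> \<cdot>\<^sub>m Sf R \<chi>"
proof (cases "\<chi> = triv_char")
  case True
  then show ?thesis using h E EC unfolding hypE_def Sf_def by auto
next
  case False
  obtain \<eta> where eta: "cmod \<eta> = 1" "adj (R \<chi>) * E * Pp = \<eta> \<cdot>\<^sub>m Pp"
    using h E EC c False unfolding hypE_def by blast
  have Ec: "E \<in> carrier_mat N N" using Es E pauli_carrier by blast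
  have S: "Sf R \<chi> = R \<chi>" unfolding Sf_def using False by simp
  have Rc: "R \<chi> \<in> carrier_mat N N" using Sf_props(1)[OF R c] S by simp
  have "E * Pp = \<eta> \<cdot>\<^sub>m R \<chi>"
  proof (rule xtrick[OF _ Rc Pp_carrier])
    show "E * Pp \<in> carrier_mat N N" using Ec by simp
    have "adj (E * Pp) * (E * Pp) = Pp * (adj E * E) * Pp"
      using Ec adj_mult[OF Ec Pp_carrier] Pp_herm by (simp add: assocL)
    then show "adj (E * Pp) * (E * Pp) = Pp"
      using pauli_unitary(1)[of E n] Es E Pp_idem by auto
    show "adj (R \<chi>) * R \<chi> = Pp" using Sf_props(2)[OF R c] S by simp
    show "adj (R \<chi>) * (E * Pp) = \<eta> \<cdot>\<^sub>m Pp" using eta(2) Ec Rc by (simp add: assocL)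
    show "adj Pp = Pp" by (rule Pp_herm)
    show "cmod \<eta> = 1" by (rule eta(1))
  qed
  then show ?thesis using S by auto
qed

lemma K_decomp: assumes R: "complete_frames n k U R" and Es: "Es \<subseteq> pauli_group n" and h: "hypE R Es"
  shows "set (map snd cs) \<subseteq> Es \<Longrightarrow> msum N (map (\<lambda>(c,E). c \<cdot>\<^sub>m E) cs) \<in> carrier_mat N N \<and>
     (\<exists>a. msum N (map (\<lambda>(c,E). c \<cdot>\<^sub>m E) cs) * Pp = MS N (\<lambda>\<chi>. a \<chi> \<cdot>\<^sub>m Sf R \<chi>) (chars n k))"
proof (induction cs)
  case Nil
  have z: "MS N (\<lambda>\<chi>. 0 \<cdot>\<^sub>m Sf R \<chi>) (chars n k) = 0\<^sub>m N N"
    by (rule MS_zero) (simp add: Sf_dim[OF R])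
  have m0: "msum N (map (\<lambda>(c,E). c \<cdot>\<^sub>m E) []) = 0\<^sub>m N N" by (simp add: msum_def)
  have "msum N (map (\<lambda>(c,E). c \<cdot>\<^sub>m E) []) * Pp = MS N (\<lambda>\<chi>. (\<lambda>_. 0) \<chi> \<cdot>\<^sub>m Sf R \<chi>) (chars n k)"
    unfolding m0 using z by simp
  then have "\<exists>a. msum N (map (\<lambda>(c,E). c \<cdot>\<^sub>m E) []) * Pp = MS N (\<lambda>\<chi>. a \<chi> \<cdot>\<^sub>m Sf R \<chi>) (chars n k)"
    by (rule exI[where x = "\<lambda>_. (0::complex)"])
  then show ?case unfolding m0 by simp
next
  case (Cons ce cs)
  obtain c E where ce: "ce = (c,E)" by (cases ce)
  have E: "E \<in> Es" using Cons.prems ce by simp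
  have Ec: "E \<in> carrier_mat N N" using Es E pauli_carrier by blast
  obtain K' a where K': "K' = msum N (map (\<lambda>(c,E). c \<cdot>\<^sub>m E) cs)" "K' \<in> carrier_mat N N"
    "K' * Pp = MS N (\<lambda>\<chi>. a \<chi> \<cdot>\<^sub>m Sf R \<chi>) (chars n k)" using Cons by auto
  have msum: "msum N (map (\<lambda>(c,E). c \<cdot>\<^sub>m E) (ce # cs)) = c \<cdot>\<^sub>m E + K'"
    unfolding K'(1) ce by (simp add: msum_def)
  obtain \<chi>E where cE: "\<chi>E \<in> chars n k" "E \<in> Cset n k U \<chi>E" using pauli_charge Es E by blast
  obtain \<eta> where eta: "E * Pp = \<eta> \<cdot>\<^sub>m Sf R \<chi>E" using E_Pp[OF R Es h E cE] by blast
  define b where "b \<chi> = (if \<chi> = \<chi>E then c * \<eta> else 0)" for \<chi>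
  have Sc: "\<And>\<chi>. \<chi> \<in> chars n k \<Longrightarrow> Sf R \<chi> \<in> carrier_mat N N" using Sf_props(1)[OF R] by blast
  have single: "MS N (\<lambda>\<chi>. b \<chi> \<cdot>\<^sub>m Sf R \<chi>) (chars n k) = b \<chi>E \<cdot>\<^sub>m Sf R \<chi>E"
    by (rule MS_single) (use chars_finite cE Sc in \<open>simp_all add: b_def Sf_dim[OF R]\<close>)
  have bE: "b \<chi>E = c * \<eta>" by (simp add: b_def)
  have "(c \<cdot>\<^sub>m E + K') * Pp = c \<cdot>\<^sub>m (E * Pp) + K' * Pp"
    using Ec K'(2) by (simp add: add_mult_distrib_mat[of _ N N _ _ N] mult_smult_assoc_mat[of _ N N _ N])
  also have "c \<cdot>\<^sub>m (E * Pp) = (c * \<eta>) \<cdot>\<^sub>m Sf R \<chi>E" unfolding eta by (simp add: smult_smult_m)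
  also have "\<dots> = MS N (\<lambda>\<chi>. b \<chi> \<cdot>\<^sub>m Sf R \<chi>) (chars n k)"
    using single bE by simp
  also have "\<dots> + K' * Pp = MS N (\<lambda>\<chi>. b \<chi> \<cdot>\<^sub>m Sf R \<chi> + a \<chi> \<cdot>\<^sub>m Sf R \<chi>) (chars n k)"
    unfolding K'(3) by (rule MS_add) (simp_all add: Sc)
  also have "\<dots> = MS N (\<lambda>\<chi>. (b \<chi> + a \<chi>) \<cdot>\<^sub>m Sf R \<chi>) (chars n k)"
    by (rule MS_cong) (simp add: add_smult_distrib_right_mat[OF Sc])
  finally show ?case unfolding msum using Ec K'(2) by auto
qed

end

context qsetup begin

lemma K_Pc: assumes R: "complete_frames n k U R" and W: "W = MS N (\<lambda>\<chi>. a \<chi> \<cdot>\<^sub>m Sf R \<chi>) (chars n k)"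
  and p: "\<psi> \<in> chars n k"
  shows "Pc \<psi> * W = a \<psi> \<cdot>\<^sub>m Sf R \<psi>"
proof -
  have Sc: "\<And>\<chi>. \<chi> \<in> chars n k \<Longrightarrow> Sf R \<chi> \<in> carrier_mat N N" using Sf_props(1)[OF R] by blast
  have "Pc \<psi> * W = MS N (\<lambda>\<chi>. Pc \<psi> * (a \<chi> \<cdot>\<^sub>m Sf R \<chi>)) (chars n k)"
    unfolding W by (rule MS_mult_left) (simp_all add: Sc)
  also have "\<dots> = MS N (\<lambda>\<chi>. if \<chi> = \<psi> then a \<psi> \<cdot>\<^sub>m Sf R \<psi> else 0\<^sub>m N N) (chars n k)"
    by (rule MS_cong) (simp add: mult_smult_distrib[OF Pc_carrier Sc] Pc_Sf[OF R _ p])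
  also have "\<dots> = (if \<psi> = \<psi> then a \<psi> \<cdot>\<^sub>m Sf R \<psi> else 0\<^sub>m N N)"
    by (rule MS_single) (use chars_finite p Sc in simp_all)
  also have "\<dots> = a \<psi> \<cdot>\<^sub>m Sf R \<psi>" by simp
  finally show ?thesis .
qed

lemma K_gram: assumes R: "complete_frames n k U R" and W: "W = MS N (\<lambda>\<chi>. a \<chi> \<cdot>\<^sub>m Sf R \<chi>) (chars n k)"
  shows "adj W * W = (\<Sum>\<chi>\<in>chars n k. cnj (a \<chi>) * a \<chi>) \<cdot>\<^sub>m Pp"
proof -
  have Sc: "\<And>\<chi>. \<chi> \<in> chars n k \<Longrightarrow> Sf R \<chi> \<in> carrier_mat N N" using Sf_props(1)[OF R] by blast
  have Wc: "W \<in> carrier_mat N N" unfolding W by simp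
  have "adj W = MS N (\<lambda>\<chi>. adj (a \<chi> \<cdot>\<^sub>m Sf R \<chi>)) (chars n k)"
    unfolding W by (rule MS_adj) (simp add: Sc)
  also have "\<dots> = MS N (\<lambda>\<chi>. cnj (a \<chi>) \<cdot>\<^sub>m adj (Sf R \<chi>)) (chars n k)"
    by (rule MS_cong) (simp add: adj_smult)
  finally have aW: "adj W = MS N (\<lambda>\<chi>. cnj (a \<chi>) \<cdot>\<^sub>m adj (Sf R \<chi>)) (chars n k)" .
  have "adj W * W = MS N (\<lambda>\<chi>. (cnj (a \<chi>) \<cdot>\<^sub>m adj (Sf R \<chi>)) * W) (chars n k)"
    unfolding aW by (rule MS_mult_right) (simp_all add: Sc Wc)
  also have "\<dots> = MS N (\<lambda>\<chi>. (cnj (a \<chi>) * a \<chi>) \<cdot>\<^sub>m Pp) (chars n k)"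
  proof (rule MS_cong)
    fix \<chi> assume c: "\<chi> \<in> chars n k"
    have "adj (Sf R \<chi>) * W = adj (Sf R \<chi>) * Pc \<chi> * W" using adjSf_Pc[OF R c] by simp
    also have "\<dots> = adj (Sf R \<chi>) * (Pc \<chi> * W)" using Sc[OF c] Wc by (simp add: assocL)
    also have "\<dots> = a \<chi> \<cdot>\<^sub>m Pp" unfolding K_Pc[OF R W c]
      using Sc[OF c] Sf_props(2)[OF R c] by (simp add: mult_smult_distrib[of _ N N _ N])
    finally have e: "adj (Sf R \<chi>) * W = a \<chi> \<cdot>\<^sub>m Pp" .
    show "(cnj (a \<chi>) \<cdot>\<^sub>m adj (Sf R \<chi>)) * W = (cnj (a \<chi>) * a \<chi>) \<cdot>\<^sub>m Pp"
      using Sc[OF c] Wc e by (simp add: mult_smult_assoc_mat[of _ N N _ N] smult_smult_m)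
  qed
  also have "\<dots> = (\<Sum>\<chi>\<in>chars n k. cnj (a \<chi>) * a \<chi>) \<cdot>\<^sub>m Pp"
    by (rule MS_scal) simp
  finally show ?thesis .
qed

lemma K_channel: assumes R: "complete_frames n k U R" and W: "K * Pp = MS N (\<lambda>\<chi>. a \<chi> \<cdot>\<^sub>m Sf R \<chi>) (chars n k)"
  and K: "K \<in> carrier_mat N N" and r: "r \<in> carrier_mat N N" and rP: "Pp * r * Pp = r"
  shows "channelO n k U R (K * r * adj K) = (\<Sum>\<chi>\<in>chars n k. cnj (a \<chi>) * a \<chi>) \<cdot>\<^sub>m r"
proof -
  have Sc: "\<And>\<chi>. \<chi> \<in> chars n k \<Longrightarrow> Sf R \<chi> \<in> carrier_mat N N" using Sf_props(1)[OF R] by blast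
  define W where "W = K * Pp"
  have Wc: "W \<in> carrier_mat N N" unfolding W_def using K by simp
  have aW: "adj W = Pp * adj K" unfolding W_def using adj_mult[OF K Pp_carrier] Pp_herm by simp
  have KrK: "K * r * adj K = W * r * adj W"
  proof -
    have "W * r * adj W = K * Pp * r * (Pp * adj K)" unfolding aW unfolding W_def by (rule refl)
    also have "\<dots> = K * (Pp * r * Pp) * adj K" using K r by (simp add: assocL)
    finally have "W * r * adj W = K * (Pp * r * Pp) * adj K" .
    then show ?thesis using rP by simp
  qed
  have "channelO n k U R (K * r * adj K) = MS N (\<lambda>\<chi>. adj (Sf R \<chi>) * Pc \<chi> * (W * r * adj W) * Pc \<chi> * Sf R \<chi>) (chars n k)"
    unfolding KrK by (rule channel_MS[OF R]) (use Wc r in simp)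
  also have "\<dots> = MS N (\<lambda>\<chi>. (cnj (a \<chi>) * a \<chi>) \<cdot>\<^sub>m r) (chars n k)"
  proof (rule MS_cong)
    fix \<chi> assume c: "\<chi> \<in> chars n k"
    define V where "V = Pc \<chi> * W"
    have Vc: "V \<in> carrier_mat N N" unfolding V_def using Wc by simp
    have V: "V = a \<chi> \<cdot>\<^sub>m Sf R \<chi>" unfolding V_def using K_Pc[OF R W[folded W_def] c] .
    have aV: "adj V = adj W * Pc \<chi>" unfolding V_def using adj_mult[OF Pc_carrier Wc] Pc_herm[OF c] by simp
    have "adj (Sf R \<chi>) * Pc \<chi> * (W * r * adj W) * Pc \<chi> * Sf R \<chi> = adj (Sf R \<chi>) * V * r * adj V * Sf R \<chi>"
    proof -
      have "adj (Sf R \<chi>) * V * r * adj V * Sf R \<chi> = adj (Sf R \<chi>) * (Pc \<chi> * W) * r * (adj W * Pc \<chi>) * Sf R \<chi>"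
        unfolding aV unfolding V_def by (rule refl)
      then show ?thesis using Sc[OF c] Wc r by (simp add: assocL)
    qed
    also have "\<dots> = (cnj (a \<chi>) * a \<chi>) \<cdot>\<^sub>m (adj (Sf R \<chi>) * Sf R \<chi> * r * (adj (Sf R \<chi>) * Sf R \<chi>))"
      unfolding V using sandwich[OF Sc[OF c] r] by (simp add: mult.commute)
    also have "\<dots> = (cnj (a \<chi>) * a \<chi>) \<cdot>\<^sub>m r" using Sf_props(2)[OF R c] rP by simp
    finally show "adj (Sf R \<chi>) * Pc \<chi> * (W * r * adj W) * Pc \<chi> * Sf R \<chi> = (cnj (a \<chi>) * a \<chi>) \<cdot>\<^sub>m r" .
  qed
  also have "\<dots> = (\<Sum>\<chi>\<in>chars n k. cnj (a \<chi>) * a \<chi>) \<cdot>\<^sub>m r"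
    by (rule MS_scal) (rule r)
  finally show ?thesis .
qed

end

lemma sand_add: assumes "A \<in> carrier_mat N N" "B \<in> carrier_mat N N" "C \<in> carrier_mat N N" "D \<in> carrier_mat N N"
  "X \<in> carrier_mat N N" "Y \<in> carrier_mat N N"
  shows "A * B * (X + Y) * C * D = A * B * X * C * D + A * B * Y * C * (D :: complex mat)"
proof -
  have ab: "A * B \<in> carrier_mat N N" using assms by simp
  have "A * B * (X + Y) = A * B * X + A * B * Y" using mult_add_distrib_mat[OF ab assms(5,6)] .
  moreover have "(A * B * X + A * B * Y) * C = A * B * X * C + A * B * Y * C"
    by (rule add_mult_distrib_mat[of _ N N]) (use assms in simp_all)
  moreover have "(A * B * X * C + A * B * Y * C) * D = A * B * X * C * D + A * B * Y * C * D"
    by (rule add_mult_distrib_mat[of _ N N]) (use assms in simp_all)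
  ultimately show ?thesis by simp
qed

lemma msum_carrier: "(\<And>x. x \<in> set xs \<Longrightarrow> x \<in> carrier_mat N N) \<Longrightarrow> msum N xs \<in> carrier_mat N N"
  by (induction xs) (simp_all add: msum_def)

context qsetup begin

lemma channel_add: assumes R: "complete_frames n k U R" and X: "X \<in> carrier_mat N N" and Y: "Y \<in> carrier_mat N N"
  shows "channelO n k U R (X + Y) = channelO n k U R X + channelO n k U R Y"
proof -
  have Sc: "\<And>\<chi>. \<chi> \<in> chars n k \<Longrightarrow> Sf R \<chi> \<in> carrier_mat N N" using Sf_props(1)[OF R] by blast
  have "channelO n k U R X + channelO n k U R Y =
     MS N (\<lambda>\<chi>. adj (Sf R \<chi>) * Pc \<chi> * X * Pc \<chi> * Sf R \<chi> + adj (Sf R \<chi>) * Pc \<chi> * Y * Pc \<chi> * Sf R \<chi>) (chars n k)"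
    unfolding channel_MS[OF R X] channel_MS[OF R Y] by (rule MS_add) (use X Y Sc in simp_all)
  also have "\<dots> = MS N (\<lambda>\<chi>. adj (Sf R \<chi>) * Pc \<chi> * (X + Y) * Pc \<chi> * Sf R \<chi>) (chars n k)"
  proof (rule MS_cong)
    fix \<chi> assume c: "\<chi> \<in> chars n k"
    show "adj (Sf R \<chi>) * Pc \<chi> * X * Pc \<chi> * Sf R \<chi> + adj (Sf R \<chi>) * Pc \<chi> * Y * Pc \<chi> * Sf R \<chi> =
      adj (Sf R \<chi>) * Pc \<chi> * (X + Y) * Pc \<chi> * Sf R \<chi>"
      by (rule sand_add[symmetric]) (use X Y Sc[OF c] in simp_all)
  qed
  also have "\<dots> = channelO n k U R (X + Y)" using channel_MS[OF R] X Y by simp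
  finally show ?thesis by simp
qed

lemma channel_zero: assumes R: "complete_frames n k U R"
  shows "channelO n k U R (0\<^sub>m N N) = 0\<^sub>m N N"
proof -
  have Sc: "\<And>\<chi>. \<chi> \<in> chars n k \<Longrightarrow> Sf R \<chi> \<in> carrier_mat N N" using Sf_props(1)[OF R] by blast
  show ?thesis unfolding channel_MS[OF R zero_carrier_mat]
    by (rule MS_zero) (simp add: Sf_dim[OF R])
qed

lemma K_summary: assumes R: "complete_frames n k U R" and Es: "Es \<subseteq> pauli_group n" and h: "hypE R Es"
  and K: "K \<in> mspan N Es" and r: "r \<in> carrier_mat N N" and rP: "Pp * r * Pp = r"
  shows "K \<in> carrier_mat N N \<and> (\<exists>w. channelO n k U R (K * r * adj K) = w \<cdot>\<^sub>m r \<and> Pp * (adj K * K) * Pp = w \<cdot>\<^sub>m Pp)"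
proof -
  obtain cs where cs: "K = msum N (map (\<lambda>(c,E). c \<cdot>\<^sub>m E) cs)" "set (map snd cs) \<subseteq> Es"
    using K unfolding mspan_def by blast
  obtain a where Kc: "K \<in> carrier_mat N N" and a: "K * Pp = MS N (\<lambda>\<chi>. a \<chi> \<cdot>\<^sub>m Sf R \<chi>) (chars n k)"
    using K_decomp[OF R Es h cs(2)] cs(1) by blast
  have "Pp * (adj K * K) * Pp = adj (K * Pp) * (K * Pp)"
    using adj_mult[OF Kc Pp_carrier] Pp_herm Kc by (simp add: assocL)
  also have "\<dots> = (\<Sum>\<chi>\<in>chars n k. cnj (a \<chi>) * a \<chi>) \<cdot>\<^sub>m Pp" by (rule K_gram[OF R a])
  finally show ?thesis using K_channel[OF R a Kc r rP] Kc by blast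
qed

lemma part1: assumes R: "complete_frames n k U R" and Es: "Es \<subseteq> pauli_group n" and h: "hypE R Es"
  shows "corrects n k U (channelO n k U R) Es"
  unfolding corrects_def
proof (intro allI impI)
  fix r Ks
  assume d: "density_pn n k U r" and Ks: "set Ks \<subseteq> mspan N Es"
    and nrm: "Pp * msum N (map (\<lambda>K. adj K * K) Ks) * Pp = Pp"
  have r: "r \<in> carrier_mat N N" and rP: "Pp * r * Pp = r"
    using d unfolding density_pn_def psd_def by auto
  have each: "\<And>K. K \<in> set Ks \<Longrightarrow> K \<in> carrier_mat N N \<and> (\<exists>w. channelO n k U R (K * r * adj K) = w \<cdot>\<^sub>m r \<and> Pp * (adj K * K) * Pp = w \<cdot>\<^sub>m Pp)"
    using K_summary[OF R Es h _ r rP] Ks by blast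
  have "\<exists>W. channelO n k U R (msum N (map (\<lambda>K. K * r * adj K) Ks)) = W \<cdot>\<^sub>m r \<and>
      Pp * msum N (map (\<lambda>K. adj K * K) Ks) * Pp = W \<cdot>\<^sub>m Pp"
    using each
  proof (induction Ks)
    case Nil
    have "channelO n k U R (msum N (map (\<lambda>K. K * r * adj K) [])) = 0 \<cdot>\<^sub>m r"
      using channel_zero[OF R] r by (simp add: msum_def)
    moreover have "Pp * msum N (map (\<lambda>K. adj K * K) []) * Pp = 0 \<cdot>\<^sub>m Pp" by (simp add: msum_def)
    ultimately show ?case by blast
  next
    case (Cons K Ks)
    obtain W where W: "channelO n k U R (msum N (map (\<lambda>K. K * r * adj K) Ks)) = W \<cdot>\<^sub>m r"
      "Pp * msum N (map (\<lambda>K. adj K * K) Ks) * Pp = W \<cdot>\<^sub>m Pp" using Cons by auto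
    have Kc: "K \<in> carrier_mat N N" using Cons.prems by simp
    obtain w where w: "channelO n k U R (K * r * adj K) = w \<cdot>\<^sub>m r" "Pp * (adj K * K) * Pp = w \<cdot>\<^sub>m Pp"
      using Cons.prems by auto
    have c1: "msum N (map (\<lambda>K. K * r * adj K) Ks) \<in> carrier_mat N N"
      by (rule msum_carrier) (use Cons.prems r in auto)
    have c2: "msum N (map (\<lambda>K. adj K * K) Ks) \<in> carrier_mat N N"
      by (rule msum_carrier) (use Cons.prems in auto)
    have "channelO n k U R (msum N (map (\<lambda>K. K * r * adj K) (K # Ks))) =
        channelO n k U R (K * r * adj K + msum N (map (\<lambda>K. K * r * adj K) Ks))"
      by (simp add: msum_def)
    also have "\<dots> = w \<cdot>\<^sub>m r + W \<cdot>\<^sub>m r" using channel_add[OF R _ c1] Kc r w W by simp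
    also have "\<dots> = (w + W) \<cdot>\<^sub>m r" using add_smult_distrib_right_mat[OF r] by simp
    finally have e1: "channelO n k U R (msum N (map (\<lambda>K. K * r * adj K) (K # Ks))) = (w + W) \<cdot>\<^sub>m r" .
    have "Pp * msum N (map (\<lambda>K. adj K * K) (K # Ks)) * Pp = Pp * (adj K * K + msum N (map (\<lambda>K. adj K * K) Ks)) * Pp"
      by (simp add: msum_def)
    also have "\<dots> = Pp * (adj K * K) * Pp + Pp * msum N (map (\<lambda>K. adj K * K) Ks) * Pp"
      using Kc c2 by (simp add: mult_add_distrib_mat[of _ N N _ N] add_mult_distrib_mat[of _ N N _ _ N])
    also have "\<dots> = (w + W) \<cdot>\<^sub>m Pp" unfolding w W using add_smult_distrib_right_mat[OF Pp_carrier] by simp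
    finally show ?case using e1 by blast
  qed
  then obtain W where W: "channelO n k U R (msum N (map (\<lambda>K. K * r * adj K) Ks)) = W \<cdot>\<^sub>m r"
      "Pp * msum N (map (\<lambda>K. adj K * K) Ks) * Pp = W \<cdot>\<^sub>m Pp" by blast
  have "W \<cdot>\<^sub>m Pp = 1 \<cdot>\<^sub>m Pp" using W(2) nrm by simp
  then have "W = 1" using smult_cancel[OF Pp_carrier Pp_nonzero] by blast
  then show "channelO n k U R (msum N (map (\<lambda>K. K * r * adj K) Ks)) = r" using W(1) by simp
qed

end

lemma cnj_one: assumes "cnj c * c = 1" shows "cmod c = 1"
proof -
  have "complex_of_real ((cmod c)^2) = 1" using cnj_mult_self[of c] assms by simp
  then have "(cmod c)^2 = 1" by (simp only: of_real_eq_1_iff)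
  then have "cmod c = 1 \<or> cmod c = -1" by (simp add: power2_eq_1_iff)
  then show ?thesis using norm_ge_zero[of c] by linarith
qed

context qsetup begin

definition ch :: "complex mat \<Rightarrow> (nat \<Rightarrow> complex)" where
  "ch E = (SOME \<chi>. \<chi> \<in> chars n k \<and> E \<in> Cset n k U \<chi>)"

lemma ch_props: assumes "E \<in> pauli_group n" shows "ch E \<in> chars n k" "E \<in> Cset n k U (ch E)"
proof -
  have "\<exists>\<chi>. \<chi> \<in> chars n k \<and> E \<in> Cset n k U \<chi>" using pauli_charge[OF assms] by blast
  then have "ch E \<in> chars n k \<and> E \<in> Cset n k U (ch E)" unfolding ch_def by (rule someI_ex)
  then show "ch E \<in> chars n k" "E \<in> Cset n k U (ch E)" by simp_all
qed

lemma ch_eq: assumes "E \<in> Cset n k U \<chi>" "\<chi> \<in> chars n k" shows "ch E = \<chi>"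
  using charge_unique[OF ch_props(2)[OF Cset_pauli[OF assms(1)]] assms(1) ch_props(1)[OF Cset_pauli[OF assms(1)]] assms(2)] .

lemma conj_to_comm: assumes g: "g \<in> G" and X: "X \<in> carrier_mat N N" and e: "U g * X * adj (U g) = c \<cdot>\<^sub>m X"
  shows "U g * X = c \<cdot>\<^sub>m (X * U g)"
proof -
  have Uc: "U g \<in> carrier_mat N N" using U_carrier[OF g] .
  have "U g * X = U g * X * (adj (U g) * U g)" using U_unitary(1)[OF g] X Uc by simp
  also have "\<dots> = (U g * X * adj (U g)) * U g" using X Uc by (simp add: assocL)
  also have "\<dots> = c \<cdot>\<^sub>m (X * U g)" unfolding e using X Uc by (simp add: mult_smult_assoc_mat[of _ N N _ N])
  finally show ?thesis .
qed

lemma Cset_adj_conj: assumes E: "E \<in> Cset n k U \<chi>" and c: "\<chi> \<in> chars n k" and g: "g \<in> G"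
  shows "U g * adj E * adj (U g) = \<chi> g \<cdot>\<^sub>m adj E"
proof -
  have Ec: "E \<in> carrier_mat N N" using pauli_carrier Cset_pauli[OF E] by blast
  have Uc: "U g \<in> carrier_mat N N" using U_carrier[OF g] .
  have e: "U g * E * adj (U g) = \<chi> g \<cdot>\<^sub>m E" using E g unfolding Cset_def by blast
  have "adj (U g * E * adj (U g)) = U g * adj E * adj (U g)"
    using Ec Uc by (simp add: adj_mult[of _ N N _ N] assocL)
  then show ?thesis using e by (simp add: adj_smult chars_cnj[OF c])
qed

lemma adjEF_comm: assumes E: "E \<in> Cset n k U \<chi>" and F: "F \<in> Cset n k U \<chi>" and c: "\<chi> \<in> chars n k"
  and g: "g \<in> G"
  shows "U g * (adj E * F) = triv_char g \<cdot>\<^sub>m ((adj E * F) * U g)"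
proof -
  have Ec: "E \<in> carrier_mat N N" using pauli_carrier Cset_pauli[OF E] by blast
  have Fc: "F \<in> carrier_mat N N" using pauli_carrier Cset_pauli[OF F] by blast
  have Uc: "U g \<in> carrier_mat N N" using U_carrier[OF g] .
  have a: "U g * adj E = \<chi> g \<cdot>\<^sub>m (adj E * U g)" using conj_to_comm[OF g _ Cset_adj_conj[OF E c g]] Ec by simp
  have b: "U g * F = \<chi> g \<cdot>\<^sub>m (F * U g)" using Cset_comm[OF F g] .
  have "U g * (adj E * F) = (U g * adj E) * F" using Ec Fc Uc by (simp add: assocL)
  also have "\<dots> = \<chi> g \<cdot>\<^sub>m (adj E * (U g * F))" unfolding a using Ec Fc Uc
    by (simp add: mult_smult_assoc_mat[of _ N N _ N] assocL)
  also have "\<dots> = (\<chi> g * \<chi> g) \<cdot>\<^sub>m ((adj E * F) * U g)" unfolding b using Ec Fc Uc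
    by (simp add: mult_smult_distrib[of _ N N _ N] assocL smult_smult_m)
  finally show ?thesis using chars_sq[OF c] unfolding triv_char_def by simp
qed

lemma PcEPp: assumes E: "E \<in> pauli_group n" and c: "\<psi> \<in> chars n k"
  shows "Pc \<psi> * E * Pp = (if \<psi> = ch E then E * Pp else 0\<^sub>m N N)"
  by (rule PXPp[OF pauli_carrier[OF E] ch_props(1)[OF E] c]) (rule Cset_comm[OF ch_props(2)[OF E]])

lemma PcEPp': assumes E: "E \<in> pauli_group n"
  shows "Pc (ch E) * (E * Pp) = E * Pp"
  using PcEPp[OF E ch_props(1)[OF E]] pauli_carrier[OF E] by (simp add: assocL)

lemma diff_charge: assumes E: "E \<in> pauli_group n" and F: "F \<in> pauli_group n" and d: "ch E \<noteq> ch F"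
  shows "Pp * adj E * F * Pp = 0\<^sub>m N N"
proof -
  have Ec: "E \<in> carrier_mat N N" and Fc: "F \<in> carrier_mat N N" using E F pauli_carrier by blast+
  have cE: "ch E \<in> chars n k" and cF: "ch F \<in> chars n k" using ch_props E F by blast+
  have "adj (E * Pp) = adj (Pc (ch E) * (E * Pp))" using PcEPp'[OF E] by simp
  also have "\<dots> = adj (E * Pp) * adj (Pc (ch E))" by (rule adj_mult[of _ N N _ N]) (simp_all add: Ec)
  finally have aE: "adj (E * Pp) = adj (E * Pp) * Pc (ch E)" using Pc_herm[OF cE] by simp
  have "Pp * adj E * F * Pp = adj (E * Pp) * (F * Pp)"
    using adj_mult[OF Ec Pp_carrier] Pp_herm Ec Fc by (simp add: assocL)
  also have "\<dots> = adj (E * Pp) * Pc (ch E) * (Pc (ch F) * (F * Pp))"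
    using aE PcEPp'[OF F] by simp
  also have "\<dots> = adj (E * Pp) * (Pc (ch E) * Pc (ch F)) * (F * Pp)"
    using Ec Fc by (simp add: assocL)
  also have "\<dots> = 0\<^sub>m N N" using Pc_Pc[OF cE cF] d Ec Fc by simp
  finally show ?thesis .
qed

lemma same_charge: assumes E: "E \<in> pauli_group n" and F: "F \<in> pauli_group n" and s: "ch E = ch F"
  and C: "Pp * adj E * F * Pp = c \<cdot>\<^sub>m Pp"
  shows "F * Pp = c \<cdot>\<^sub>m (E * Pp)" "cmod c = 1"
proof -
  have Ec: "E \<in> carrier_mat N N" and Fc: "F \<in> carrier_mat N N" using E F pauli_carrier by blast+
  have cE: "ch E \<in> chars n k" using ch_props E by blast
  have EF: "adj E * F \<in> carrier_mat N N" using Ec Fc by simp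
  have "Pp * (adj E * F) * Pp = adj E * F * Pp"
    using PXPp[OF EF triv_chars triv_chars] adjEF_comm[OF ch_props(2)[OF E] _ cE] ch_props(2)[OF F] s
    by (simp add: Pp_eq[symmetric])
  then have a: "adj E * F * Pp = c \<cdot>\<^sub>m Pp" using C Ec Fc by (simp add: assocL)
  have "E * adj E * F * Pp = F * Pp" using pauli_unitary(2)[OF E] Fc by simp
  moreover have "E * adj E * F * Pp = E * (adj E * F * Pp)" using Ec Fc by (simp add: assocL)
  ultimately have "F * Pp = E * (adj E * F * Pp)" by simp
  also have "\<dots> = c \<cdot>\<^sub>m (E * Pp)" unfolding a using Ec by (simp add: mult_smult_distrib[of _ N N _ N])
  finally show FE: "F * Pp = c \<cdot>\<^sub>m (E * Pp)" .
  have "Pp = Pp * (adj F * F) * Pp" using pauli_unitary(1)[OF F] Pp_idem by simp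
  also have "\<dots> = adj (F * Pp) * (F * Pp)"
    using adj_mult[OF Fc Pp_carrier] Pp_herm Fc by (simp add: assocL)
  also have "\<dots> = (cnj c * c) \<cdot>\<^sub>m (adj (E * Pp) * (E * Pp))" unfolding FE using Ec
    by (simp add: adj_smult mult_smult_assoc_mat[of _ N N _ N] mult_smult_distrib[of _ N N _ N] smult_smult_m mult.commute)
  also have "adj (E * Pp) * (E * Pp) = Pp * (adj E * E) * Pp"
    using adj_mult[OF Ec Pp_carrier] Pp_herm Ec by (simp add: assocL)
  also have "\<dots> = Pp" using pauli_unitary(1)[OF E] Pp_idem by simp
  finally have e: "Pp = (cnj c * c) \<cdot>\<^sub>m Pp" .
  have "1 \<cdot>\<^sub>m Pp = (cnj c * c) \<cdot>\<^sub>m Pp" unfolding one_smult_m by (rule e)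
  then have "1 = cnj c * c" by (rule smult_cancel[OF Pp_carrier Pp_nonzero])
  then have "cnj c * c = 1" by simp
  then show "cmod c = 1" by (rule cnj_one)
qed

end

lemma rank_sum_le: fixes f g :: "'x \<Rightarrow> nat \<Rightarrow> complex"
  assumes "finite S"
  shows "vec_space.rank m (mat m m (\<lambda>(i,j). \<Sum>\<chi>\<in>S. f \<chi> i * g \<chi> j)) \<le> card S"
  using assms
proof (induction S rule: finite_induct)
  case empty
  have z: "mat m m (\<lambda>(i,j). \<Sum>\<chi>\<in>{}. f \<chi> i * g \<chi> j) = (0\<^sub>m m m :: complex mat)"
    by (rule eq_matI) simp_all
  show ?case unfolding z using vec_space.rank_0I[of m m] by simp
next
  case (insert x F)
  have e: "mat m m (\<lambda>(i,j). \<Sum>\<chi>\<in>insert x F. f \<chi> i * g \<chi> j) =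
     mat m m (\<lambda>(i,j). f x i * g x j) + mat m m (\<lambda>(i,j). \<Sum>\<chi>\<in>F. f \<chi> i * g \<chi> j)"
    by (rule eq_matI) (simp_all add: insert)
  have "vec_space.rank m (mat m m (\<lambda>(i,j). f x i * g x j) + mat m m (\<lambda>(i,j). \<Sum>\<chi>\<in>F. f \<chi> i * g \<chi> j))
     \<le> vec_space.rank m (mat m m (\<lambda>(i,j). f x i * g x j)) + vec_space.rank m (mat m m (\<lambda>(i,j). \<Sum>\<chi>\<in>F. f \<chi> i * g \<chi> j))"
    by (rule vec_space.rank_subadditive[of _ m m]) simp_all
  moreover have "vec_space.rank m (mat m m (\<lambda>(i,j). f x i * g x j)) \<le> 1"
    by (rule vec_space.rank_le_1_product_entries[of _ m m "f x" "g x"]) simp_all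
  ultimately show ?case unfolding e using insert.IH card_insert_disjoint[OF insert(1,2)] by linarith
qed

context qsetup begin

lemma all_present: assumes Es: "Es \<subseteq> pauli_group n" and mc: "maximal_correctable n k U Es"
  shows "\<forall>\<chi>\<in>chars n k. \<exists>E\<in>Es. ch E = \<chi>"
proof -
  obtain C e where fin: "finite Es" and cw: "correctable_with n k U Es C"
    and e: "bij_betw e {..<card Es} Es"
    and rk: "vec_space.rank (card Es) (mat (card Es) (card Es) (\<lambda>(i,j). C (e i) (e j))) = 2^(n-k)"
    using mc unfolding maximal_correctable_def by blast
  have CE: "\<And>E F. E \<in> Es \<Longrightarrow> F \<in> Es \<Longrightarrow> Pp * adj E * F * Pp = C E F \<cdot>\<^sub>m Pp"
    using cw unfolding correctable_with_def by blast
  have pE: "\<And>E. E \<in> Es \<Longrightarrow> E \<in> pauli_group n" using Es by blast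
  define Pres where "Pres = ch ` Es"
  have PresC: "Pres \<subseteq> chars n k" unfolding Pres_def using ch_props(1) pE by blast
  have Presf: "finite Pres" unfolding Pres_def using fin by simp
  define r where "r \<chi> = (SOME E. E \<in> Es \<and> ch E = \<chi>)" for \<chi>
  have r: "r \<chi> \<in> Es \<and> ch (r \<chi>) = \<chi>" if "\<chi> \<in> Pres" for \<chi>
    unfolding r_def by (rule someI_ex) (use that in \<open>auto simp: Pres_def\<close>)
  define \<alpha> where "\<alpha> F = C (r (ch F)) F" for F
  have rel: "F * Pp = \<alpha> F \<cdot>\<^sub>m (r (ch F) * Pp)" if F: "F \<in> Es" for F
  proof -
    have p: "ch F \<in> Pres" unfolding Pres_def using F by simp
    show ?thesis unfolding \<alpha>_def
      by (rule same_charge(1)[OF pE[OF conjunct1[OF r[OF p]]] pE[OF F]]) (use r[OF p] CE F in auto)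
  qed
  have Cval: "C E F = (if ch E = ch F then cnj (\<alpha> E) * \<alpha> F else 0)" if E: "E \<in> Es" and F: "F \<in> Es" for E F
  proof (cases "ch E = ch F")
    case False
    have "C E F \<cdot>\<^sub>m Pp = 0 \<cdot>\<^sub>m Pp" using CE[OF E F] diff_charge[OF pE[OF E] pE[OF F] False] by simp
    then have "C E F = 0" by (rule smult_cancel[OF Pp_carrier Pp_nonzero])
    then show ?thesis using False by simp
  next
    case True
    have Ec: "E \<in> carrier_mat N N" and Fc: "F \<in> carrier_mat N N" using E F pE pauli_carrier by blast+
    define R0 where "R0 = r (ch E)"
    have p: "ch E \<in> Pres" unfolding Pres_def using E by simp
    have R0: "R0 \<in> Es" unfolding R0_def using r[OF p] by blast
    have R0c: "R0 \<in> carrier_mat N N" using R0 pE pauli_carrier by blast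
    have eE: "E * Pp = \<alpha> E \<cdot>\<^sub>m (R0 * Pp)" using rel[OF E] unfolding R0_def .
    have eF: "F * Pp = \<alpha> F \<cdot>\<^sub>m (R0 * Pp)" using rel[OF F] True unfolding R0_def by simp
    have "C E F \<cdot>\<^sub>m Pp = adj (E * Pp) * (F * Pp)"
      using CE[OF E F] adj_mult[OF Ec Pp_carrier] Pp_herm Ec Fc by (simp add: assocL)
    also have "\<dots> = (cnj (\<alpha> E) * \<alpha> F) \<cdot>\<^sub>m (adj (R0 * Pp) * (R0 * Pp))" unfolding eE eF using R0c
      by (simp add: adj_smult mult_smult_assoc_mat[of _ N N _ N] mult_smult_distrib[of _ N N _ N] smult_smult_m mult.commute)
    also have "adj (R0 * Pp) * (R0 * Pp) = Pp * (adj R0 * R0) * Pp"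
      using adj_mult[OF R0c Pp_carrier] Pp_herm R0c by (simp add: assocL)
    also have "\<dots> = Pp" using pauli_unitary(1)[OF pE[OF R0]] Pp_idem by simp
    finally have "C E F = cnj (\<alpha> E) * \<alpha> F" by (rule smult_cancel[OF Pp_carrier Pp_nonzero])
    then show ?thesis using True by simp
  qed
  define m where "m = card Es"
  have eEs: "\<And>i. i < m \<Longrightarrow> e i \<in> Es" using e unfolding m_def by (simp add: bij_betw_apply)
  define f where "f \<chi> i = (if ch (e i) = \<chi> then cnj (\<alpha> (e i)) else 0)" for \<chi> i
  define g where "g \<chi> j = (if ch (e j) = \<chi> then \<alpha> (e j) else 0)" for \<chi> j
  have M: "mat m m (\<lambda>(i,j). C (e i) (e j)) = mat m m (\<lambda>(i,j). \<Sum>\<chi>\<in>Pres. f \<chi> i * g \<chi> j)"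
  proof (rule eq_matI)
    fix i j assume ij: "i < dim_row (mat m m (\<lambda>(i,j). \<Sum>\<chi>\<in>Pres. f \<chi> i * g \<chi> j))"
       "j < dim_col (mat m m (\<lambda>(i,j). \<Sum>\<chi>\<in>Pres. f \<chi> i * g \<chi> j))"
    then have i: "i < m" and j: "j < m" by simp_all
    have pi: "ch (e i) \<in> Pres" unfolding Pres_def using eEs[OF i] by simp
    have "(\<Sum>\<chi>\<in>Pres. f \<chi> i * g \<chi> j) = (\<Sum>\<chi>\<in>Pres. if \<chi> = ch (e i) then (if ch (e i) = ch (e j) then cnj (\<alpha> (e i)) * \<alpha> (e j) else 0) else 0)"
      by (rule sum.cong) (auto simp: f_def g_def)
    also have "\<dots> = (if ch (e i) = ch (e j) then cnj (\<alpha> (e i)) * \<alpha> (e j) else 0)"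
      using Presf pi by simp
    also have "\<dots> = C (e i) (e j)" using Cval[OF eEs[OF i] eEs[OF j]] by simp
    finally show "mat m m (\<lambda>(i,j). C (e i) (e j)) $$ (i,j) = mat m m (\<lambda>(i,j). \<Sum>\<chi>\<in>Pres. f \<chi> i * g \<chi> j) $$ (i,j)"
      using i j by simp
  qed simp_all
  have "2^(n-k) \<le> card Pres" using rk rank_sum_le[OF Presf, of m f g] M unfolding m_def by simp
  moreover have "card Pres \<le> card (chars n k)" using card_mono[OF chars_finite PresC] .
  ultimately have "card Pres = card (chars n k)" using chars_card by simp
  then have "Pres = chars n k" using card_subset_eq[OF chars_finite PresC] by simp
  then have pc: "ch ` Es = chars n k" unfolding Pres_def .
  show ?thesis
  proof
    fix \<chi> assume "\<chi> \<in> chars n k"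
    then have "\<chi> \<in> ch ` Es" using pc by simp
    then obtain E where "E \<in> Es" "\<chi> = ch E" by (rule imageE)
    then show "\<exists>E\<in>Es. ch E = \<chi>" by blast
  qed
qed

end

context qsetup begin

lemma gram_EPp: assumes E: "E \<in> pauli_group n" shows "adj (E * Pp) * (E * Pp) = Pp"
proof -
  have Ec: "E \<in> carrier_mat N N" using E pauli_carrier by blast
  have "adj (E * Pp) * (E * Pp) = Pp * (adj E * E) * Pp"
    using adj_mult[OF Ec Pp_carrier] Pp_herm Ec by (simp add: assocL)
  also have "\<dots> = Pp" using pauli_unitary(1)[OF E] Pp_idem by simp
  finally show ?thesis .
qed

lemma one_Cset: assumes "1\<^sub>m N \<in> pauli_group n" shows "1\<^sub>m N \<in> Cset n k U triv_char"
proof -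
  have "U g * 1\<^sub>m N * adj (U g) = triv_char g \<cdot>\<^sub>m 1\<^sub>m N" if g: "g \<in> G" for g
    using U_unitary(2)[OF g] U_carrier[OF g] by (simp add: triv_char_def)
  then show ?thesis unfolding Cset_def using assms by blast
qed

definition rep :: "complex mat set \<Rightarrow> (nat \<Rightarrow> complex) \<Rightarrow> complex mat" where
  "rep Es \<chi> = (SOME E. E \<in> Es \<and> ch E = \<chi>)"

lemma rep_props: assumes Es: "Es \<subseteq> pauli_group n" and mc: "maximal_correctable n k U Es"
  and c: "\<chi> \<in> chars n k"
  shows "rep Es \<chi> \<in> Es" "ch (rep Es \<chi>) = \<chi>"
proof -
  have "\<exists>E. E \<in> Es \<and> ch E = \<chi>" using all_present[OF Es mc] c by blast
  then have "rep Es \<chi> \<in> Es \<and> ch (rep Es \<chi>) = \<chi>" unfolding rep_def by (rule someI_ex)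
  then show "rep Es \<chi> \<in> Es" "ch (rep Es \<chi>) = \<chi>" by simp_all
qed

lemma exist_part: assumes Es: "Es \<subseteq> pauli_group n" and I: "1\<^sub>m N \<in> Es" and mc: "maximal_correctable n k U Es"
  shows "complete_frames n k U (\<lambda>\<chi>. rep Es \<chi> * Pp)" "hypE (\<lambda>\<chi>. rep Es \<chi> * Pp) Es"
proof -
  obtain C where cw: "correctable_with n k U Es C" using mc unfolding maximal_correctable_def by blast
  have CE: "\<And>E F. E \<in> Es \<Longrightarrow> F \<in> Es \<Longrightarrow> Pp * adj E * F * Pp = C E F \<cdot>\<^sub>m Pp"
    using cw unfolding correctable_with_def by blast
  have pE: "\<And>E. E \<in> Es \<Longrightarrow> E \<in> pauli_group n" using Es by blast
  show "complete_frames n k U (\<lambda>\<chi>. rep Es \<chi> * Pp)"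
    unfolding complete_frames_def frame_field_def
  proof (intro ballI conjI)
    fix \<chi> assume "\<chi> \<in> chars n k - {triv_char}"
    then have c: "\<chi> \<in> chars n k" by simp
    have r: "rep Es \<chi> \<in> pauli_group n" using rep_props(1)[OF Es mc c] pE by blast
    show "rep Es \<chi> * Pp \<in> carrier_mat (2^n) (2^n)" using pauli_carrier[OF r] by simp
    show "adj (rep Es \<chi> * Pp) * (rep Es \<chi> * Pp) = Pp" by (rule gram_EPp[OF r])
    show "Pc \<chi> * (rep Es \<chi> * Pp) = rep Es \<chi> * Pp" using PcEPp'[OF r] rep_props(2)[OF Es mc c] by simp
  qed
  show "hypE (\<lambda>\<chi>. rep Es \<chi> * Pp) Es"
    unfolding hypE_def
  proof (intro ballI conjI impI)
    fix E assume E: "E \<in> Es"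
    {
      assume Et: "E \<in> Cset n k U triv_char"
      have chE: "ch E = triv_char" using ch_eq[OF Et triv_chars] .
      have I1: "1\<^sub>m N \<in> pauli_group n" using pE[OF I] .
      have chI: "ch (1\<^sub>m N) = triv_char" using ch_eq[OF one_Cset[OF I1] triv_chars] .
      have s: "ch (1\<^sub>m N) = ch E" using chE chI by simp
      have "Pp * adj (1\<^sub>m N) * E * Pp = C (1\<^sub>m N) E \<cdot>\<^sub>m Pp" using CE[OF I E] .
      from same_charge[OF I1 pE[OF E] s this]
      show "\<exists>\<eta>. cmod \<eta> = 1 \<and> E * Ppn n k U = \<eta> \<cdot>\<^sub>m Ppn n k U" by auto
    }
    fix \<chi> assume c: "\<chi> \<in> chars n k - {triv_char}" and EC: "E \<in> Cset n k U \<chi>"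
    then have c': "\<chi> \<in> chars n k" by simp
    have chE: "ch E = \<chi>" using ch_eq[OF EC c'] .
    define r where "r = rep Es \<chi>"
    have rEs: "r \<in> Es" and chr: "ch r = \<chi>" unfolding r_def using rep_props[OF Es mc c'] by simp_all
    have rp: "r \<in> pauli_group n" using pE[OF rEs] .
    have rc: "r \<in> carrier_mat N N" using pauli_carrier[OF rp] .
    have Ec: "E \<in> carrier_mat N N" using pauli_carrier[OF pE[OF E]] .
    have s: "ch r = ch E" using chE chr by simp
    obtain cc where cc: "E * Pp = cc \<cdot>\<^sub>m (r * Pp)" "cmod cc = 1"
      using same_charge[OF rp pE[OF E] s CE[OF rEs E]] by blast
    have "adj (r * Pp) * E * Pp = adj (r * Pp) * (E * Pp)" using rc Ec by (simp add: assocL)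
    also have "\<dots> = cc \<cdot>\<^sub>m (adj (r * Pp) * (r * Pp))" unfolding cc(1) using rc
      by (simp add: mult_smult_distrib[of _ N N _ N])
    also have "\<dots> = cc \<cdot>\<^sub>m Pp" using gram_EPp[OF rp] by simp
    finally show "\<exists>\<eta>. cmod \<eta> = 1 \<and> adj (rep Es \<chi> * Ppn n k U) * E * Ppn n k U = \<eta> \<cdot>\<^sub>m Ppn n k U"
      using cc(2) unfolding r_def by blast
  qed
qed

end

lemma smult_cancel2: assumes "A \<in> carrier_mat N M" "A \<noteq> 0\<^sub>m N M" "c \<cdot>\<^sub>m A = d \<cdot>\<^sub>m (A::complex mat)"
  shows "c = d"
proof -
  obtain i j where ij: "i < N" "j < M" "A $$ (i,j) \<noteq> 0"
    using assms(1,2) by (metis eq_matI carrier_matD index_zero_mat)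
  have "(c \<cdot>\<^sub>m A) $$ (i,j) = (d \<cdot>\<^sub>m A) $$ (i,j)" using assms(3) by simp
  then have "c * A $$ (i,j) = d * A $$ (i,j)" using ij assms(1) by simp
  then show ?thesis using ij(3) by simp
qed

lemma one1: "(X :: complex mat) \<in> carrier_mat 1 1 \<Longrightarrow> X = (X $$ (0,0)) \<cdot>\<^sub>m 1\<^sub>m 1"
  by (rule eq_matI) auto

lemma gram_col: assumes u: "u \<in> carrier_mat N 1"
  shows "adj u * u = complex_of_real (\<Sum>b<N. (cmod (u $$ (b,0)))^2) \<cdot>\<^sub>m 1\<^sub>m 1"
proof (rule eq_matI)
  fix i j assume "i < dim_row (complex_of_real (\<Sum>b<N. (cmod (u $$ (b,0)))^2) \<cdot>\<^sub>m 1\<^sub>m 1)"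
    "j < dim_col (complex_of_real (\<Sum>b<N. (cmod (u $$ (b,0)))^2) \<cdot>\<^sub>m (1\<^sub>m 1 :: complex mat))"
  then have ij: "i = 0" "j = 0" by simp_all
  have d: "dim_row u = N" "dim_col u = 1" using u by auto
  have "(adj u * u) $$ (0,0) = (\<Sum>b<N. cnj (u $$ (b,0)) * u $$ (b,0))"
    using d by (simp add: scalar_prod_def atLeast0LessThan)
  also have "\<dots> = (\<Sum>b<N. complex_of_real ((cmod (u $$ (b,0)))^2))"
    by (rule sum.cong) (simp_all add: cnj_mult_self)
  also have "\<dots> = complex_of_real (\<Sum>b<N. (cmod (u $$ (b,0)))^2)" by (simp add: of_real_sum)
  finally show "(adj u * u) $$ (i,j) = (complex_of_real (\<Sum>b<N. (cmod (u $$ (b,0)))^2) \<cdot>\<^sub>m 1\<^sub>m 1) $$ (i,j)"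
    using ij by simp
qed (use u in simp_all)

lemma col_nonzero_pos: assumes u: "u \<in> carrier_mat N 1" and nz: "u \<noteq> 0\<^sub>m N 1"
  shows "(\<Sum>b<N. (cmod (u $$ (b,0)))^2) > 0"
proof -
  obtain i j where ij: "i < N" "j < 1" "u $$ (i,j) \<noteq> 0"
    using u nz by (metis eq_matI carrier_matD index_zero_mat)
  have "(cmod (u $$ (i,0)))^2 > 0" using ij by simp
  moreover have "(cmod (u $$ (i,0)))^2 \<le> (\<Sum>b<N. (cmod (u $$ (b,0)))^2)"
    by (rule member_le_sum) (use ij in simp_all)
  ultimately show ?thesis by linarith
qed

context qsetup begin

lemma density_rank1: assumes V: "V \<in> carrier_mat N 1" and PV: "Pp * V = V" and nV: "adj V * V = 1\<^sub>m 1"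
  shows "density_pn n k U (V * adj V)"
proof -
  have d: "dim_row V = N" "dim_col V = 1" using V by auto
  have psd: "psd N (V * adj V)" unfolding psd_def
  proof (intro conjI ballI)
    show "V * adj V \<in> carrier_mat N N" using V by simp
    fix v :: "complex vec" assume v: "v \<in> carrier_vec N"
    define s where "s = (\<Sum>j<N. cnj (V $$ (j,0)) * v $ j)"
    have mv: "(V * adj V) *\<^sub>v v = vec N (\<lambda>i. V $$ (i,0) * s)"
    proof (rule eq_vecI)
      fix i assume "i < dim_vec (vec N (\<lambda>i. V $$ (i,0) * s))"
      then have i: "i < N" by simp
      have "((V * adj V) *\<^sub>v v) $ i = (\<Sum>j<N. (V $$ (i,0) * cnj (V $$ (j,0))) * v $ j)"
        using i d v by (simp add: scalar_prod_def atLeast0LessThan)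
      also have "\<dots> = V $$ (i,0) * s" unfolding s_def by (simp add: sum_distrib_left mult.assoc)
      finally show "((V * adj V) *\<^sub>v v) $ i = vec N (\<lambda>i. V $$ (i,0) * s) $ i" using i by simp
    qed (use d in simp)
    have "conjugate v \<bullet> ((V * adj V) *\<^sub>v v) = (\<Sum>i<N. cnj (v $ i) * (V $$ (i,0) * s))"
      unfolding mv using v by (simp add: scalar_prod_def atLeast0LessThan)
    also have "\<dots> = s * cnj s" unfolding s_def
      by (simp add: sum_distrib_left sum_distrib_right ac_simps)
    also have "\<dots> = complex_of_real ((cmod s)^2)" using cnj_mult_self[of s] by (simp add: mult.commute)
    finally have e: "conjugate v \<bullet> ((V * adj V) *\<^sub>v v) = complex_of_real ((cmod s)^2)" .
    show "Im (conjugate v \<bullet> ((V * adj V) *\<^sub>v v)) = 0" unfolding e by simp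
    show "Re (conjugate v \<bullet> ((V * adj V) *\<^sub>v v)) \<ge> 0" unfolding e by simp
  qed
  have "mtrace (V * adj V) = (\<Sum>i<N. V $$ (i,0) * cnj (V $$ (i,0)))"
    unfolding mtrace_def using d by (simp add: scalar_prod_def)
  also have "\<dots> = (adj V * V) $$ (0,0)" using d by (simp add: scalar_prod_def atLeast0LessThan mult.commute)
  also have "\<dots> = 1" using nV by simp
  finally have tr: "mtrace (V * adj V) = 1" .
  have aV: "adj V * Pp = adj V"
    using arg_cong[OF PV, of adj] adj_mult[OF Pp_carrier V] Pp_herm by simp
  have a1: "Pp * (V * adj V) = Pp * V * adj V"
    by (rule assoc_mult_mat[symmetric, of _ N N _ 1 _ N]) (use V in simp_all)
  have a2: "Pp * V * adj V * Pp = (Pp * V) * (adj V * Pp)"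
    by (rule assoc_mult_mat[of _ N 1 _ N _ N]) (use V mult_carrier_mat[OF Pp_carrier V] in simp_all)
  have "Pp * (V * adj V) * Pp = (Pp * V) * (adj V * Pp)" unfolding a1 a2 ..
  also have "\<dots> = V * adj V" using PV aV by simp
  finally show ?thesis unfolding density_pn_def using psd tr by simp
qed

end

definition ecol :: "nat \<Rightarrow> nat \<Rightarrow> complex mat" where
  "ecol N j = mat N 1 (\<lambda>(a,_). if a = j then 1 else 0)"

lemma ecol_carrier[simp]: "ecol N j \<in> carrier_mat N 1" unfolding ecol_def by simp
lemma ecol_carrier'[simp]: "ecol N j \<in> carrier_mat N (Suc 0)" unfolding ecol_def by simp

lemma ecol_mult: assumes X: "X \<in> carrier_mat N N" and j: "j < N" and a: "a < N"
  shows "(X * ecol N j) $$ (a,0) = X $$ (a,j)"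
proof -
  have d: "dim_row X = N" "dim_col X = N" using X by auto
  have "(X * ecol N j) $$ (a,0) = (\<Sum>b<N. X $$ (a,b) * (if b = j then 1 else 0))"
    using d a by (simp add: ecol_def scalar_prod_def atLeast0LessThan)
  also have "\<dots> = X $$ (a,j)" using j by (simp add: if_distrib cong: if_cong)
  finally show ?thesis .
qed

lemma normalize_col: assumes u: "u \<in> carrier_mat N 1" and nz: "u \<noteq> 0\<^sub>m N 1"
  shows "\<exists>c. c \<noteq> 0 \<and> adj (c \<cdot>\<^sub>m u) * (c \<cdot>\<^sub>m u) = 1\<^sub>m 1"
proof -
  define t where "t = (\<Sum>b<N. (cmod (u $$ (b,0)))^2)"
  have t: "t > 0" unfolding t_def by (rule col_nonzero_pos[OF u nz])
  define c where "c = complex_of_real (1 / sqrt t)"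
  have c0: "c \<noteq> 0" unfolding c_def using t by simp
  have st: "sqrt t * sqrt t = t" using t by simp
  have r: "(1 / sqrt t) * (1 / sqrt t) * t = 1" using t st by (simp add: field_simps)
  have "cnj c * c * complex_of_real t = complex_of_real ((1 / sqrt t) * (1 / sqrt t) * t)"
    unfolding c_def by (simp only: complex_cnj_complex_of_real of_real_mult)
  then have cc: "cnj c * c * complex_of_real t = 1" using r by simp
  have "adj (c \<cdot>\<^sub>m u) * (c \<cdot>\<^sub>m u) = (cnj c * c) \<cdot>\<^sub>m (adj u * u)"
    using u by (simp add: adj_smult mult_smult_assoc_mat[of _ 1 N _ 1] mult_smult_distrib[of _ 1 N _ 1] smult_smult_m mult.commute)
  also have "\<dots> = 1\<^sub>m 1" unfolding gram_col[OF u] t_def[symmetric] smult_smult_m cc by simp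
  finally show ?thesis using c0 by blast
qed

context qsetup begin

lemma unit_exists: "\<exists>V. V \<in> carrier_mat N 1 \<and> Pp * V = V \<and> adj V * V = 1\<^sub>m 1"
proof -
  obtain i j where ij: "i < N" "j < N" "Pp $$ (i,j) \<noteq> 0"
    using Pp_nonzero Pp_carrier by (metis eq_matI carrier_matD index_zero_mat)
  define u where "u = Pp * ecol N j"
  have uc: "u \<in> carrier_mat N 1" unfolding u_def by (rule mult_carrier_mat[OF Pp_carrier ecol_carrier])
  have "u $$ (i,0) \<noteq> 0" unfolding u_def using ecol_mult[OF Pp_carrier ij(2,1)] ij(3) by simp
  then have unz: "u \<noteq> 0\<^sub>m N 1" using ij by auto
  have "Pp * (Pp * ecol N j) = Pp * Pp * ecol N j"
    by (rule assoc_mult_mat[symmetric, of _ N N _ N _ 1]) simp_all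
  then have Pu: "Pp * u = u" unfolding u_def using Pp_idem by simp
  obtain c where c: "adj (c \<cdot>\<^sub>m u) * (c \<cdot>\<^sub>m u) = 1\<^sub>m 1" using normalize_col[OF uc unz] by blast
  have "Pp * (c \<cdot>\<^sub>m u) = c \<cdot>\<^sub>m u" using Pu uc by (simp add: mult_smult_distrib[of _ N N _ 1])
  then show ?thesis using c uc by (intro exI[of _ "c \<cdot>\<^sub>m u"]) simp
qed

lemma eig_step1: assumes M: "M \<in> carrier_mat N N" and V: "V \<in> carrier_mat N 1" and nV: "adj V * V = 1\<^sub>m 1"
  and h: "M * V * adj (M * V) = V * adj V"
  shows "\<exists>l. M * V = l \<cdot>\<^sub>m V"
proof -
  define W where "W = M * V"
  have Wc: "W \<in> carrier_mat N 1" unfolding W_def using M V by simp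
  define c where "c = (adj W * V) $$ (0,0)"
  have aWV: "adj W * V = c \<cdot>\<^sub>m 1\<^sub>m 1" unfolding c_def by (rule one1) (rule mult_carrier_mat[OF adj_carrier[OF Wc] V])
  have "W * adj W * V = V * adj V * V" using h unfolding W_def by simp
  also have "\<dots> = V * (adj V * V)" by (rule assoc_mult_mat[of _ N 1 _ N _ 1]) (use V in simp_all)
  also have "\<dots> = V" using nV V by simp
  finally have e1: "W * adj W * V = V" .
  have "W * adj W * V = W * (adj W * V)" by (rule assoc_mult_mat[of _ N 1 _ N _ 1]) (use Wc V in simp_all)
  also have "\<dots> = c \<cdot>\<^sub>m W" unfolding aWV using Wc by (simp add: mult_smult_distrib[of _ N 1 _ 1])
  finally have e2: "c \<cdot>\<^sub>m W = V" using e1 by simp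
  have c0: "c \<noteq> 0"
  proof
    assume "c = 0"
    then have "V = 0\<^sub>m N 1" using e2 Wc by auto
    then have "adj V * V = 0\<^sub>m 1 1" by simp
    then have "(1\<^sub>m 1 :: complex mat) $$ (0,0) = (0\<^sub>m 1 1 :: complex mat) $$ (0,0)" using nV by simp
    then show False by simp
  qed
  have "W = (1 / c) \<cdot>\<^sub>m V" unfolding e2[symmetric] using c0 by (simp add: smult_smult_m)
  then show ?thesis unfolding W_def by blast
qed

end

context qsetup begin

definition Hyp :: "complex mat \<Rightarrow> bool" where
  "Hyp M \<longleftrightarrow> (\<forall>V. V \<in> carrier_mat N 1 \<longrightarrow> Pp * V = V \<longrightarrow> adj V * V = 1\<^sub>m 1 \<longrightarrow> M * V * adj (M * V) = V * adj V)"

lemma eig_inrange: assumes M: "M \<in> carrier_mat N N" and H: "Hyp M"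
  and u: "u \<in> carrier_mat N 1" and Pu: "Pp * u = u"
  shows "\<exists>l. M * u = l \<cdot>\<^sub>m u"
proof (cases "u = 0\<^sub>m N 1")
  case True
  then have "M * u = 0 \<cdot>\<^sub>m u" using M by simp
  then show ?thesis by blast
next
  case False
  obtain c where c0: "c \<noteq> 0" and c: "adj (c \<cdot>\<^sub>m u) * (c \<cdot>\<^sub>m u) = 1\<^sub>m 1" using normalize_col[OF u False] by blast
  have Vc: "c \<cdot>\<^sub>m u \<in> carrier_mat N 1" using u by simp
  have PV: "Pp * (c \<cdot>\<^sub>m u) = c \<cdot>\<^sub>m u" using Pu u by (simp add: mult_smult_distrib[of _ N N _ 1])
  have "M * (c \<cdot>\<^sub>m u) * adj (M * (c \<cdot>\<^sub>m u)) = (c \<cdot>\<^sub>m u) * adj (c \<cdot>\<^sub>m u)"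
    using H Vc PV c unfolding Hyp_def by blast
  then obtain l where l: "M * (c \<cdot>\<^sub>m u) = l \<cdot>\<^sub>m (c \<cdot>\<^sub>m u)" using eig_step1[OF M Vc c] by blast
  have "c \<cdot>\<^sub>m (M * u) = c \<cdot>\<^sub>m (l \<cdot>\<^sub>m u)"
    using l M u by (simp add: mult_smult_distrib[of _ N N _ 1] smult_smult_m mult.commute)
  then have "(1/c) \<cdot>\<^sub>m (c \<cdot>\<^sub>m (M * u)) = (1/c) \<cdot>\<^sub>m (c \<cdot>\<^sub>m (l \<cdot>\<^sub>m u))" by simp
  then have "M * u = l \<cdot>\<^sub>m u" using c0 by (simp add: smult_smult_m)
  then show ?thesis by blast
qed

lemma col_eq_entries: assumes "A \<in> carrier_mat N 1" "B \<in> carrier_mat N 1"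
  "\<And>a. a < N \<Longrightarrow> A $$ (a,0) = B $$ (a,0)" shows "A = B"
  by (rule eq_matI) (use assms in auto)

lemma eig_scalar: assumes M: "M \<in> carrier_mat N N" and MP: "M * Pp = M" and H: "Hyp M"
  shows "\<exists>\<theta>. cmod \<theta> = 1 \<and> M = \<theta> \<cdot>\<^sub>m Pp"
proof -
  obtain V0 where V0: "V0 \<in> carrier_mat N 1" "Pp * V0 = V0" "adj V0 * V0 = 1\<^sub>m 1" using unit_exists by blast
  have V0nz: "V0 \<noteq> 0\<^sub>m N 1"
  proof
    assume "V0 = 0\<^sub>m N 1"
    then have "(1\<^sub>m 1 :: complex mat) $$ (0,0) = (0\<^sub>m 1 1 :: complex mat) $$ (0,0)" using V0(3) by simp
    then show False by simp
  qed
  obtain \<theta> where th: "M * V0 = \<theta> \<cdot>\<^sub>m V0" using eig_inrange[OF M H V0(1,2)] by blast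
  have all: "M * w = \<theta> \<cdot>\<^sub>m w" if w: "w \<in> carrier_mat N 1" "Pp * w = w" for w
  proof -
    obtain \<mu> where mu: "M * w = \<mu> \<cdot>\<^sub>m w" using eig_inrange[OF M H w] by blast
    have sc: "V0 + w \<in> carrier_mat N 1" using V0 w by simp
    have Ps: "Pp * (V0 + w) = V0 + w" using V0 w by (simp add: mult_add_distrib_mat[of _ N N _ 1])
    obtain \<nu> where nu: "M * (V0 + w) = \<nu> \<cdot>\<^sub>m (V0 + w)" using eig_inrange[OF M H sc Ps] by blast
    have "M * (V0 + w) = \<theta> \<cdot>\<^sub>m V0 + \<mu> \<cdot>\<^sub>m w" using th mu M V0 w by (simp add: mult_add_distrib_mat[of _ N N _ 1])
    then have eq: "\<theta> \<cdot>\<^sub>m V0 + \<mu> \<cdot>\<^sub>m w = \<nu> \<cdot>\<^sub>m (V0 + w)" using nu by simp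
    have ent: "\<theta> * V0 $$ (a,0) + \<mu> * w $$ (a,0) = \<nu> * V0 $$ (a,0) + \<nu> * w $$ (a,0)" if a: "a < N" for a
    proof -
      have "(\<theta> \<cdot>\<^sub>m V0 + \<mu> \<cdot>\<^sub>m w) $$ (a,0) = (\<nu> \<cdot>\<^sub>m (V0 + w)) $$ (a,0)" using eq by simp
      then show ?thesis using a V0 w by (simp add: distrib_left)
    qed
    show ?thesis
    proof (cases "\<nu> = \<theta>")
      case True
      have "\<mu> \<cdot>\<^sub>m w = \<theta> \<cdot>\<^sub>m w"
        by (rule col_eq_entries) (use w ent True in simp_all)
      then show ?thesis using mu by simp
    next
      case False
      define \<kappa> where "\<kappa> = (\<nu> - \<mu>) / (\<theta> - \<nu>)"
      have Vk: "V0 = \<kappa> \<cdot>\<^sub>m w"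
      proof (rule col_eq_entries)
        show "V0 \<in> carrier_mat N 1" using V0 by simp
        show "\<kappa> \<cdot>\<^sub>m w \<in> carrier_mat N 1" using w by simp
        fix a assume a: "a < N"
        have "(\<theta> - \<nu>) * V0 $$ (a,0) = (\<nu> - \<mu>) * w $$ (a,0)" using ent[OF a] by (simp add: algebra_simps)
        then have "V0 $$ (a,0) = \<kappa> * w $$ (a,0)" unfolding \<kappa>_def using False by (simp add: field_simps)
        then show "V0 $$ (a,0) = (\<kappa> \<cdot>\<^sub>m w) $$ (a,0)" using a w by simp
      qed
      have knz: "\<kappa> \<noteq> 0" using V0nz Vk w by auto
      have wnz: "w \<noteq> 0\<^sub>m N 1" using V0nz Vk by auto
      have "(\<kappa> * \<mu>) \<cdot>\<^sub>m w = (\<theta> * \<kappa>) \<cdot>\<^sub>m w"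
      proof -
        have "M * V0 = \<kappa> \<cdot>\<^sub>m (M * w)" unfolding Vk using M w by (simp add: mult_smult_distrib[of _ N N _ 1])
        then have "(\<kappa> * \<mu>) \<cdot>\<^sub>m w = M * V0" using mu by (simp add: smult_smult_m)
        also have "\<dots> = \<theta> \<cdot>\<^sub>m V0" by (rule th)
        also have "\<dots> = (\<theta> * \<kappa>) \<cdot>\<^sub>m w" unfolding Vk by (simp add: smult_smult_m)
        finally show ?thesis .
      qed
      then have "\<kappa> * \<mu> = \<theta> * \<kappa>" by (rule smult_cancel2[OF w(1) wnz, rotated])
      then have "\<mu> = \<theta>" using knz by (simp add: mult.commute)
      then show ?thesis using mu by simp
    qed
  qed
  have MPp: "M = \<theta> \<cdot>\<^sub>m Pp"
  proof (rule eq_matI)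
    fix a j assume "a < dim_row (\<theta> \<cdot>\<^sub>m Pp)" "j < dim_col (\<theta> \<cdot>\<^sub>m Pp)"
    then have a: "a < N" and j: "j < N" by simp_all
    define w where "w = Pp * ecol N j"
    have wc: "w \<in> carrier_mat N 1" unfolding w_def by (rule mult_carrier_mat[OF Pp_carrier ecol_carrier])
    have "Pp * (Pp * ecol N j) = Pp * Pp * ecol N j"
      by (rule assoc_mult_mat[symmetric, of _ N N _ N _ 1]) simp_all
    then have Pw: "Pp * w = w" unfolding w_def using Pp_idem by simp
    have "M * Pp * ecol N j = M * w" unfolding w_def
      by (rule assoc_mult_mat[of _ N N _ N _ 1]) (use M in simp_all)
    also have "\<dots> = \<theta> \<cdot>\<^sub>m w" by (rule all[OF wc Pw])
    finally have e: "M * ecol N j = \<theta> \<cdot>\<^sub>m w" using MP by simp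
    have "M $$ (a,j) = (M * ecol N j) $$ (a,0)" using ecol_mult[OF M j a] by simp
    also have "\<dots> = \<theta> * w $$ (a,0)" unfolding e using a wc by simp
    also have "w $$ (a,0) = Pp $$ (a,j)" unfolding w_def using ecol_mult[OF Pp_carrier j a] .
    finally show "M $$ (a,j) = (\<theta> \<cdot>\<^sub>m Pp) $$ (a,j)" using a j by simp
  qed (use M in simp_all)
  have "M * V0 * adj (M * V0) = V0 * adj V0" using H V0 unfolding Hyp_def by blast
  then have "(cnj \<theta> * \<theta>) \<cdot>\<^sub>m (V0 * adj V0) = V0 * adj V0" unfolding th using V0(1)
    by (simp add: adj_smult mult_smult_assoc_mat[of _ N 1 _ N] mult_smult_distrib[of _ N 1 _ N] smult_smult_m)
  then have "(cnj \<theta> * \<theta>) \<cdot>\<^sub>m (V0 * adj V0) * V0 = V0 * adj V0 * V0" by simp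
  moreover have "V0 * adj V0 * V0 = V0"
  proof -
    have "V0 * adj V0 * V0 = V0 * (adj V0 * V0)" by (rule assoc_mult_mat[of _ N 1 _ N _ 1]) (use V0 in simp_all)
    then show ?thesis using V0 by simp
  qed
  moreover have "(cnj \<theta> * \<theta>) \<cdot>\<^sub>m (V0 * adj V0) * V0 = (cnj \<theta> * \<theta>) \<cdot>\<^sub>m (V0 * adj V0 * V0)"
    by (rule mult_smult_assoc_mat[of _ N N _ 1]) (use V0 in simp_all)
  ultimately have "(cnj \<theta> * \<theta>) \<cdot>\<^sub>m V0 = 1 \<cdot>\<^sub>m V0" by simp
  then have "cnj \<theta> * \<theta> = 1" by (rule smult_cancel2[OF V0(1) V0nz])
  then have "cmod \<theta> = 1" by (rule cnj_one)
  then show ?thesis using MPp by blast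
qed

end

context qsetup begin

lemma chan_single: assumes R: "complete_frames n k U R" and E: "E \<in> pauli_group n"
  and r: "r \<in> carrier_mat N N" and rP: "Pp * r * Pp = r"
  shows "channelO n k U R (E * r * adj E) = (adj (Sf R (ch E)) * (E * Pp)) * r * adj (adj (Sf R (ch E)) * (E * Pp))"
proof -
  have Sc: "\<And>\<chi>. \<chi> \<in> chars n k \<Longrightarrow> Sf R \<chi> \<in> carrier_mat N N" using Sf_props(1)[OF R] by blast
  have Ec: "E \<in> carrier_mat N N" using pauli_carrier[OF E] .
  have cE: "ch E \<in> chars n k" using ch_props(1)[OF E] .
  define W where "W = E * Pp"
  have Wc: "W \<in> carrier_mat N N" unfolding W_def using Ec by simp
  have aW: "adj W = Pp * adj E" unfolding W_def using adj_mult[OF Ec Pp_carrier] Pp_herm by simp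
  have KrK: "E * r * adj E = W * r * adj W"
  proof -
    have "W * r * adj W = E * Pp * r * (Pp * adj E)" unfolding aW unfolding W_def by (rule refl)
    also have "\<dots> = E * (Pp * r * Pp) * adj E" using Ec r by (simp add: assocL)
    finally show ?thesis using rP by simp
  qed
  have PW: "Pc \<psi> * W = (if \<psi> = ch E then W else 0\<^sub>m N N)" if c: "\<psi> \<in> chars n k" for \<psi>
  proof -
    have "Pc \<psi> * W = Pc \<psi> * E * Pp" unfolding W_def using Ec by (simp add: assocL)
    then show ?thesis using PcEPp[OF E c] unfolding W_def by simp
  qed
  have T: "adj (Sf R \<psi>) * Pc \<psi> * (W * r * adj W) * Pc \<psi> * Sf R \<psi>
      = adj (Sf R \<psi>) * (Pc \<psi> * W) * r * adj (Pc \<psi> * W) * Sf R \<psi>" if c: "\<psi> \<in> chars n k" for \<psi>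
  proof -
    have aV: "adj (Pc \<psi> * W) = adj W * Pc \<psi>" using adj_mult[OF Pc_carrier Wc] Pc_herm[OF c] by simp
    show ?thesis unfolding aV using Sc[OF c] Wc r by (simp add: assocL)
  qed
  have "channelO n k U R (E * r * adj E) = MS N (\<lambda>\<psi>. adj (Sf R \<psi>) * Pc \<psi> * (W * r * adj W) * Pc \<psi> * Sf R \<psi>) (chars n k)"
    unfolding KrK by (rule channel_MS[OF R]) (use Wc r in simp)
  also have "\<dots> = adj (Sf R (ch E)) * Pc (ch E) * (W * r * adj W) * Pc (ch E) * Sf R (ch E)"
  proof (rule MS_single)
    show "finite (chars n k)" by (rule chars_finite)
    show "ch E \<in> chars n k" by (rule cE)
    fix \<psi> assume c: "\<psi> \<in> chars n k" and ne: "\<psi> \<noteq> ch E"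
    show "adj (Sf R \<psi>) * Pc \<psi> * (W * r * adj W) * Pc \<psi> * Sf R \<psi> = 0\<^sub>m N N"
      unfolding T[OF c] PW[OF c] using ne Sc[OF c] r by simp
  next
    show "adj (Sf R (ch E)) * Pc (ch E) * (W * r * adj W) * Pc (ch E) * Sf R (ch E) \<in> carrier_mat N N"
      using Sc[OF cE] Wc r by simp
  qed
  also have "\<dots> = adj (Sf R (ch E)) * W * r * adj W * Sf R (ch E)"
    unfolding T[OF cE] PW[OF cE] by simp
  also have "\<dots> = (adj (Sf R (ch E)) * W) * r * adj (adj (Sf R (ch E)) * W)"
    using adj_mult[OF adj_carrier[OF Sc[OF cE]] Wc] Sc[OF cE] Wc r by (simp add: assocL)
  finally show ?thesis unfolding W_def .
qed

end

context qsetup begin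

lemma uniq_part: assumes Es: "Es \<subseteq> pauli_group n" and mc: "maximal_correctable n k U Es"
  and R: "complete_frames n k U R'" and corr: "corrects n k U (channelO n k U R') Es"
  and c: "\<chi> \<in> chars n k - {triv_char}"
  shows "\<exists>\<theta>. cmod \<theta> = 1 \<and> R' \<chi> = \<theta> \<cdot>\<^sub>m (rep Es \<chi> * Pp)"
proof -
  have c': "\<chi> \<in> chars n k" and nt: "\<chi> \<noteq> triv_char" using c by simp_all
  define E where "E = rep Es \<chi>"
  have EEs: "E \<in> Es" and chE: "ch E = \<chi>" unfolding E_def using rep_props[OF Es mc c'] by simp_all
  have Ep: "E \<in> pauli_group n" using EEs Es by blast
  have Ec: "E \<in> carrier_mat N N" using pauli_carrier[OF Ep] .
  have S: "Sf R' \<chi> = R' \<chi>" unfolding Sf_def using nt by simp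
  have Rc: "R' \<chi> \<in> carrier_mat N N" using Sf_props(1)[OF R c'] S by simp
  have m1: "msum N (map (\<lambda>(c,E). c \<cdot>\<^sub>m E) [(1,E)]) = E" using Ec by (simp add: msum_def)
  have EK: "E \<in> mspan N Es" unfolding mspan_def
  proof (rule CollectI, rule exI[of _ "[(1,E)]"])
    show "E = msum N (map (\<lambda>(c,E). c \<cdot>\<^sub>m E) [(1,E)]) \<and> set (map snd [(1::complex,E)]) \<subseteq> Es"
      using m1 EEs by simp
  qed
  have nrm: "Pp * msum N (map (\<lambda>K. adj K * K) [E]) * Pp = Pp"
    using pauli_unitary(1)[OF Ep] Ec Pp_idem by (simp add: msum_def)
  define M where "M = adj (R' \<chi>) * (E * Pp)"
  have Mc: "M \<in> carrier_mat N N" unfolding M_def using Rc Ec by simp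
  have H: "Hyp M" unfolding Hyp_def
  proof (intro allI impI)
    fix V assume V: "V \<in> carrier_mat N 1" and PV: "Pp * V = V" and nV: "adj V * V = 1\<^sub>m 1"
    define r where "r = V * adj V"
    have d: "density_pn n k U r" unfolding r_def by (rule density_rank1[OF V PV nV])
    have rc: "r \<in> carrier_mat N N" and rP: "Pp * r * Pp = r"
      using d unfolding density_pn_def psd_def by auto
    have "channelO n k U R' (msum N (map (\<lambda>K. K * r * adj K) [E])) = r"
      using corr[unfolded corrects_def, rule_format, of r "[E]"] d EK nrm by simp
    moreover have "msum N (map (\<lambda>K. K * r * adj K) [E]) = E * r * adj E" using Ec rc by (simp add: msum_def)
    ultimately have "M * r * adj M = r" using chan_single[OF R Ep rc rP] chE S unfolding M_def by simp
    moreover have "M * V * adj (M * V) = M * r * adj M"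
    proof -
      have aMV: "adj (M * V) = adj V * adj M" by (rule adj_mult[OF Mc V])
      have "M * V * (adj V * adj M) = M * V * adj V * adj M"
        by (rule assoc_mult_mat[symmetric, of _ N 1 _ N _ N]) (use Mc V in simp_all)
      also have "M * V * adj V = M * (V * adj V)"
        by (rule assoc_mult_mat[of _ N N _ 1 _ N]) (use Mc V in simp_all)
      finally show ?thesis unfolding aMV r_def .
    qed
    ultimately show "M * V * adj (M * V) = V * adj V" unfolding r_def by simp
  qed
  have MP: "M * Pp = M" unfolding M_def using Rc Ec Pp_idem by (simp add: assocL)
  obtain \<theta> where th: "cmod \<theta> = 1" "M = \<theta> \<cdot>\<^sub>m Pp" using eig_scalar[OF Mc MP H] by blast
  have A: "E * Pp = \<theta> \<cdot>\<^sub>m R' \<chi>"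
  proof (rule xtrick[OF _ Rc Pp_carrier])
    show "E * Pp \<in> carrier_mat N N" using Ec by simp
    show "adj (E * Pp) * (E * Pp) = Pp" by (rule gram_EPp[OF Ep])
    show "adj (R' \<chi>) * R' \<chi> = Pp" using Sf_props(2)[OF R c'] S by simp
    show "adj (R' \<chi>) * (E * Pp) = \<theta> \<cdot>\<^sub>m Pp" using th(2) unfolding M_def .
    show "adj Pp = Pp" by (rule Pp_herm)
    show "cmod \<theta> = 1" by (rule th(1))
  qed
  have ct: "cnj \<theta> * \<theta> = 1" using th(1) cnj_mult_self[of \<theta>] by simp
  have "cnj \<theta> \<cdot>\<^sub>m (E * Pp) = R' \<chi>" unfolding A smult_smult_m ct by simp
  moreover have "cmod (cnj \<theta>) = 1" using th(1) by simp
  ultimately show ?thesis unfolding E_def by metis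
qed

end

theorem mainTheorem8:
  fixes n k :: nat and U :: "nat \<Rightarrow> complex mat"
  assumes "1 \<le> n" and "k < n" and "pauli_rep n k U"
  shows "(\<forall>R Es. complete_frames n k U R \<longrightarrow> Es \<subseteq> pauli_group n \<longrightarrow> 1\<^sub>m (2^n) \<in> Es \<longrightarrow>
            (\<forall>E\<in>Es. (E \<in> Cset n k U triv_char \<longrightarrow>
                        (\<exists>\<eta>. cmod \<eta> = 1 \<and> E * Ppn n k U = \<eta> \<cdot>\<^sub>m Ppn n k U)) \<and>
                     (\<forall>\<chi>\<in>chars n k - {triv_char}. E \<in> Cset n k U \<chi> \<longrightarrow>
                        (\<exists>\<eta>. cmod \<eta> = 1 \<and> adj (R \<chi>) * E * Ppn n k U = \<eta> \<cdot>\<^sub>m Ppn n k U))) \<longrightarrow>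
            corrects n k U (channelO n k U R) Es)
       \<and> (\<forall>Es. Es \<subseteq> pauli_group n \<longrightarrow> 1\<^sub>m (2^n) \<in> Es \<longrightarrow> maximal_correctable n k U Es \<longrightarrow>
            (\<exists>R. complete_frames n k U R \<and> corrects n k U (channelO n k U R) Es \<and>
               (\<forall>R'. complete_frames n k U R' \<and> corrects n k U (channelO n k U R') Es \<longrightarrow>
                  (\<forall>\<chi>\<in>chars n k - {triv_char}. \<exists>\<theta>. cmod \<theta> = 1 \<and> R' \<chi> = \<theta> \<cdot>\<^sub>m R \<chi>))))"
proof -
  interpret qsetup n k U using assms by unfold_locales
  show ?thesis
  proof (intro conjI allI impI)
    fix R Es assume R: "complete_frames n k U R" and Es: "Es \<subseteq> pauli_group n"
      and h: "\<forall>E\<in>Es. (E \<in> Cset n k U triv_char \<longrightarrow>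
                        (\<exists>\<eta>. cmod \<eta> = 1 \<and> E * Ppn n k U = \<eta> \<cdot>\<^sub>m Ppn n k U)) \<and>
                     (\<forall>\<chi>\<in>chars n k - {triv_char}. E \<in> Cset n k U \<chi> \<longrightarrow>
                        (\<exists>\<eta>. cmod \<eta> = 1 \<and> adj (R \<chi>) * E * Ppn n k U = \<eta> \<cdot>\<^sub>m Ppn n k U))"
    show "corrects n k U (channelO n k U R) Es"
      by (rule part1[OF R Es]) (use h in \<open>simp add: hypE_def\<close>)
  next
    fix Es assume Es: "Es \<subseteq> pauli_group n" and I: "1\<^sub>m (2^n) \<in> Es" and mc: "maximal_correctable n k U Es"
    let ?R = "\<lambda>\<chi>. rep Es \<chi> * Pp"
    have cf: "complete_frames n k U ?R" and hy: "hypE ?R Es" using exist_part[OF Es I mc] by simp_all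
    have co: "corrects n k U (channelO n k U ?R) Es" by (rule part1[OF cf Es hy])
    have un: "\<forall>R'. complete_frames n k U R' \<and> corrects n k U (channelO n k U R') Es \<longrightarrow>
                  (\<forall>\<chi>\<in>chars n k - {triv_char}. \<exists>\<theta>. cmod \<theta> = 1 \<and> R' \<chi> = \<theta> \<cdot>\<^sub>m ?R \<chi>)"
      using uniq_part[OF Es mc] by blast
    show "\<exists>R. complete_frames n k U R \<and> corrects n k U (channelO n k U R) Es \<and>
               (\<forall>R'. complete_frames n k U R' \<and> corrects n k U (channelO n k U R') Es \<longrightarrow>
                  (\<forall>\<chi>\<in>chars n k - {triv_char}. \<exists>\<theta>. cmod \<theta> = 1 \<and> R' \<chi> = \<theta> \<cdot>\<^sub>m R \<chi>))"
      using cf co un by blast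
  qed
qed

end
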